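(* Let $M/K$ be obtained by strong cluster magnification from a subextension $L/K$ with $r_K(L)\ne1$. Then for fields $N_1,\dots,N_k$, the chain $M\supsetneq N_1\supsetneq\cdots\supsetneq N_k$ is the unique descending chain for $M/K$ if and only if $L\supsetneq N_1\supsetneq\cdots\supsetneq N_k$ is the unique descending chain for $L/K$.
   Context: $K$ is a perfect field with a fixed algebraic closure $\bar K$; all extensions finite inside $\bar K$; $\tilde L$ is the Galois closure of $L/K$. Cluster size $r_K(L)$: the number of roots in $L$ of the minimal polynomial over $K$ of a primitive element of $L/K$ (equals $|{\rm Aut}(L/K)|$). Strong cluster magnification: $M/K$ is obtained by strong cluster magnification from $L/K$ ($K\subseteq L\subseteq M$) if $[L:K]>2$ and there is a finite Galois $F/K$ with $\tilde L$ and $F$ linearly disjoint over $K$ and $LF=M$. The unique descending chain of a finite extension $P/K$ is $P=N_0\supsetneq N_1\supsetneq\cdots\supsetneq N_k$ where each $N_i$ is the unique intermediate field of $N_{i-1}/K$ with $N_{i-1}/N_i$ Galois of degree $r_K(N_{i-1})$, stopping at the first $N_k$ with $r_K(N_k)=1$. *)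

theory Defs
  imports "HOL-Computational_Algebra.Polynomial"
begin

text \<open>Ambient: an algebraically closed field of type 'a (containing a fixed algebraic
closure of K). Fields are subsets of 'a closed under the field operations.\<close>

definition is_subfield :: "'a::field set \<Rightarrow> bool" where
  "is_subfield E \<longleftrightarrow> 0 \<in> E \<and> 1 \<in> E \<and>
     (\<forall>x\<in>E. \<forall>y\<in>E. x + y \<in> E \<and> x - y \<in> E \<and> x * y \<in> E) \<and>
     (\<forall>x\<in>E. inverse x \<in> E)"

definition perfect_subfield :: "'a::field set \<Rightarrow> bool" where
  "perfect_subfield K \<longleftrightarrow> is_subfield K \<and>
     (CHAR('a) = 0 \<or> (\<forall>x\<in>K. \<exists>y\<in>K. y ^ CHAR('a) = x))"

definition gen_field :: "'a::field set \<Rightarrow> 'a set" where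
  "gen_field S = \<Inter>{E. is_subfield E \<and> S \<subseteq> E}"

definition compositum :: "'a::field set \<Rightarrow> 'a set \<Rightarrow> 'a set" where
  "compositum A B = gen_field (A \<union> B)"

definition lin_indep_over :: "'a::field set \<Rightarrow> 'a set \<Rightarrow> bool" where
  "lin_indep_over E S \<longleftrightarrow> finite S \<and>
     (\<forall>c. (\<forall>s\<in>S. c s \<in> E) \<and> (\<Sum>s\<in>S. c s * s) = 0 \<longrightarrow> (\<forall>s\<in>S. c s = 0))"

definition span_over :: "'a::field set \<Rightarrow> 'a set \<Rightarrow> 'a set" where
  "span_over E S = {x. \<exists>c. (\<forall>s\<in>S. c s \<in> E) \<and> x = (\<Sum>s\<in>S. c s * s)}"

definition is_basis_over :: "'a::field set \<Rightarrow> 'a set \<Rightarrow> 'a set \<Rightarrow> bool" where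
  "is_basis_over E F S \<longleftrightarrow> S \<subseteq> F \<and> lin_indep_over E S \<and> span_over E S = F"

definition finite_ext :: "'a::field set \<Rightarrow> 'a set \<Rightarrow> bool" where
  "finite_ext E F \<longleftrightarrow> is_subfield E \<and> is_subfield F \<and> E \<subseteq> F \<and> (\<exists>S. is_basis_over E F S)"

text \<open>Degree [F:E] (0 if not finite).\<close>
definition ext_degree :: "'a::field set \<Rightarrow> 'a set \<Rightarrow> nat" where
  "ext_degree E F = (if \<exists>S. is_basis_over E F S then card (SOME S. is_basis_over E F S) else 0)"

definition is_embedding :: "'a::field set \<Rightarrow> 'a set \<Rightarrow> ('a \<Rightarrow> 'a) \<Rightarrow> bool" where
  "is_embedding E F \<sigma> \<longleftrightarrow> \<sigma> 1 = 1 \<and>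
     (\<forall>x\<in>F. \<forall>y\<in>F. \<sigma> (x + y) = \<sigma> x + \<sigma> y \<and> \<sigma> (x * y) = \<sigma> x * \<sigma> y) \<and>
     (\<forall>x\<in>E. \<sigma> x = x)"

definition Aut :: "'a::field set \<Rightarrow> 'a set \<Rightarrow> ('a \<Rightarrow> 'a) set" where
  "Aut E F = {\<sigma>. is_embedding E F \<sigma> \<and> \<sigma> ` F = F \<and> (\<forall>x. x \<notin> F \<longrightarrow> \<sigma> x = x)}"

definition galois_ext :: "'a::field set \<Rightarrow> 'a set \<Rightarrow> bool" where
  "galois_ext E F \<longleftrightarrow> finite_ext E F \<and> card (Aut E F) = ext_degree E F"

definition galois_closure :: "'a::field set \<Rightarrow> 'a set \<Rightarrow> 'a set" where
  "galois_closure K L = gen_field (\<Union>{\<sigma> ` L | \<sigma>. is_embedding K L \<sigma>})"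

definition lin_disjoint :: "'a::field set \<Rightarrow> 'a set \<Rightarrow> 'a set \<Rightarrow> bool" where
  "lin_disjoint K A B \<longleftrightarrow> (\<forall>S. S \<subseteq> A \<and> lin_indep_over K S \<longrightarrow> lin_indep_over B S)"

definition poly_over :: "'a::field set \<Rightarrow> 'a poly \<Rightarrow> bool" where
  "poly_over E p \<longleftrightarrow> (\<forall>i. coeff p i \<in> E)"

definition min_poly :: "'a::field set \<Rightarrow> 'a \<Rightarrow> 'a poly" where
  "min_poly E \<theta> = (SOME p. poly_over E p \<and> lead_coeff p = 1 \<and> poly p \<theta> = 0 \<and>
       (\<forall>q. q \<noteq> 0 \<and> poly_over E q \<and> poly q \<theta> = 0 \<longrightarrow> degree p \<le> degree q))"

definition primitive_elem :: "'a::field set \<Rightarrow> 'a set \<Rightarrow> 'a \<Rightarrow> bool" where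
  "primitive_elem K L \<theta> \<longleftrightarrow> \<theta> \<in> L \<and> L = gen_field (insert \<theta> K)"

text \<open>Cluster size r_K(L): number of roots in L of the minimal polynomial over K
  of a primitive element of L/K.\<close>
definition cluster_size :: "'a::field set \<Rightarrow> 'a set \<Rightarrow> nat" where
  "cluster_size K L = card {\<beta>\<in>L. poly (min_poly K (SOME \<theta>. primitive_elem K L \<theta>)) \<beta> = 0}"

definition strong_cluster_magnification :: "'a::field set \<Rightarrow> 'a set \<Rightarrow> 'a set \<Rightarrow> bool" where
  "strong_cluster_magnification K L M \<longleftrightarrow> K \<subseteq> L \<and> L \<subseteq> M \<and> ext_degree K L > 2 \<and>
     (\<exists>F. K \<subseteq> F \<and> galois_ext K F \<and> lin_disjoint K (galois_closure K L) F \<and> compositum L F = M)"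

definition chain_step :: "'a::field set \<Rightarrow> 'a set \<Rightarrow> 'a set \<Rightarrow> bool" where
  "chain_step K P N \<longleftrightarrow>
     (is_subfield N \<and> K \<subseteq> N \<and> N \<subset> P \<and> galois_ext N P \<and> ext_degree N P = cluster_size K P) \<and>
     (\<forall>N'. is_subfield N' \<and> K \<subseteq> N' \<and> N' \<subseteq> P \<and> galois_ext N' P \<and>
           ext_degree N' P = cluster_size K P \<longrightarrow> N' = N)"

text \<open>unique_desc_chain K P [N1,...,Nk]: P = N0 \<supsetneq> N1 \<supsetneq> ... \<supsetneq> Nk is the unique
  descending chain of P/K (stopping at the first Nk with r_K(Nk) = 1).\<close>
fun unique_desc_chain :: "'a::field set \<Rightarrow> 'a set \<Rightarrow> 'a set list \<Rightarrow> bool" where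
  "unique_desc_chain K P [] \<longleftrightarrow> cluster_size K P = 1"
| "unique_desc_chain K P (N # Ns) \<longleftrightarrow>
     cluster_size K P \<noteq> 1 \<and> chain_step K P N \<and> unique_desc_chain K N Ns"

end

theory Submission
  imports "HOL-Algebra.Multiplicative_Group" Defs "HOL-Computational_Algebra.Euclidean_Algorithm"
begin


section \<open>Subfields\<close>

lemma sf_0: "is_subfield E \<Longrightarrow> 0 \<in> E" by (simp add: is_subfield_def)
lemma sf_1: "is_subfield E \<Longrightarrow> 1 \<in> E" by (simp add: is_subfield_def)
lemma sf_add: "is_subfield E \<Longrightarrow> x \<in> E \<Longrightarrow> y \<in> E \<Longrightarrow> x + y \<in> E" by (simp add: is_subfield_def)
lemma sf_diff: "is_subfield E \<Longrightarrow> x \<in> E \<Longrightarrow> y \<in> E \<Longrightarrow> x - y \<in> E" by (simp add: is_subfield_def)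
lemma sf_mult: "is_subfield E \<Longrightarrow> x \<in> E \<Longrightarrow> y \<in> E \<Longrightarrow> x * y \<in> E" by (simp add: is_subfield_def)
lemma sf_inverse: "is_subfield E \<Longrightarrow> x \<in> E \<Longrightarrow> inverse x \<in> E" by (simp add: is_subfield_def)
lemma sf_uminus: "is_subfield E \<Longrightarrow> x \<in> E \<Longrightarrow> - x \<in> E"
  using sf_diff[of E 0 x] sf_0[of E] by simp
lemma sf_divide: "is_subfield E \<Longrightarrow> x \<in> E \<Longrightarrow> y \<in> E \<Longrightarrow> x / y \<in> E"
  by (simp add: divide_inverse sf_mult sf_inverse)
lemma sf_power: "is_subfield E \<Longrightarrow> x \<in> E \<Longrightarrow> x ^ n \<in> E"
  by (induction n) (auto simp: sf_1 sf_mult)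
lemma sf_sum: "is_subfield E \<Longrightarrow> (\<And>i. i \<in> A \<Longrightarrow> f i \<in> E) \<Longrightarrow> sum f A \<in> E"
  by (induction A rule: infinite_finite_induct) (auto simp: sf_0 sf_add)
lemma sf_prod: "is_subfield E \<Longrightarrow> (\<And>i. i \<in> A \<Longrightarrow> f i \<in> E) \<Longrightarrow> prod f A \<in> E"
  by (induction A rule: infinite_finite_induct) (auto simp: sf_1 sf_mult)
lemma sf_of_nat: "is_subfield E \<Longrightarrow> of_nat n \<in> E"
  by (induction n) (auto simp: sf_0 sf_1 sf_add)

lemmas sf_closed = sf_0 sf_1 sf_add sf_diff sf_mult sf_inverse sf_uminus sf_divide sf_power sf_of_nat

lemma gen_field_sf: "is_subfield (gen_field S)"
  unfolding gen_field_def is_subfield_def by auto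
lemma gen_field_sup: "S \<subseteq> gen_field S"
  unfolding gen_field_def by auto
lemma gen_field_min: "is_subfield E \<Longrightarrow> S \<subseteq> E \<Longrightarrow> gen_field S \<subseteq> E"
  unfolding gen_field_def by auto
lemma gen_field_mono: "S \<subseteq> T \<Longrightarrow> gen_field S \<subseteq> gen_field T"
  by (meson gen_field_min gen_field_sf gen_field_sup order_trans)

section \<open>Polynomials over subfields\<close>

lemma po_0[simp]: "poly_over E 0 \<longleftrightarrow> 0 \<in> E" by (simp add: poly_over_def)
lemma po_coeff: "poly_over E p \<Longrightarrow> coeff p i \<in> E" by (simp add: poly_over_def)
lemma po_zero: "is_subfield E \<Longrightarrow> poly_over E 0" by (simp add: sf_0)
lemma po_pCons: "is_subfield E \<Longrightarrow> a \<in> E \<Longrightarrow> poly_over E p \<Longrightarrow> poly_over E (pCons a p)"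
  by (auto simp: poly_over_def coeff_pCons split: nat.splits)
lemma po_const: "is_subfield E \<Longrightarrow> a \<in> E \<Longrightarrow> poly_over E [:a:]"
  by (simp add: po_pCons sf_0)
lemma po_one: "is_subfield E \<Longrightarrow> poly_over E 1"
  by (simp add: poly_over_def coeff_1 sf_0 sf_1)
lemma po_add: "is_subfield E \<Longrightarrow> poly_over E p \<Longrightarrow> poly_over E q \<Longrightarrow> poly_over E (p + q)"
  by (simp add: poly_over_def sf_add)
lemma po_diff: "is_subfield E \<Longrightarrow> poly_over E p \<Longrightarrow> poly_over E q \<Longrightarrow> poly_over E (p - q)"
  by (simp add: poly_over_def sf_diff)
lemma po_uminus: "is_subfield E \<Longrightarrow> poly_over E p \<Longrightarrow> poly_over E (- p)"
  by (simp add: poly_over_def sf_uminus)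
lemma po_smult: "is_subfield E \<Longrightarrow> a \<in> E \<Longrightarrow> poly_over E p \<Longrightarrow> poly_over E (smult a p)"
  by (simp add: poly_over_def sf_mult)
lemma po_mult: "is_subfield E \<Longrightarrow> poly_over E p \<Longrightarrow> poly_over E q \<Longrightarrow> poly_over E (p * q)"
  unfolding poly_over_def coeff_mult by (auto intro!: sf_sum sf_mult)
lemma po_monom: "is_subfield E \<Longrightarrow> a \<in> E \<Longrightarrow> poly_over E (monom a n)"
  by (simp add: poly_over_def coeff_monom sf_0)
lemma po_power: "is_subfield E \<Longrightarrow> poly_over E p \<Longrightarrow> poly_over E (p ^ n)"
  by (induction n) (auto simp: po_one po_mult)
lemma po_sum: "is_subfield E \<Longrightarrow> (\<And>i. i \<in> A \<Longrightarrow> poly_over E (f i)) \<Longrightarrow> poly_over E (sum f A)"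
  by (induction A rule: infinite_finite_induct) (auto simp: po_zero po_add sf_0)
lemma po_prod: "is_subfield E \<Longrightarrow> (\<And>i. i \<in> A \<Longrightarrow> poly_over E (f i)) \<Longrightarrow> poly_over E (prod f A)"
  by (induction A rule: infinite_finite_induct) (auto simp: po_one po_mult)
lemma po_mono: "poly_over E p \<Longrightarrow> E \<subseteq> F \<Longrightarrow> poly_over F p"
  by (auto simp: poly_over_def)
lemma po_pcompose: "is_subfield E \<Longrightarrow> poly_over E p \<Longrightarrow> poly_over E q \<Longrightarrow> poly_over E (pcompose p q)"
proof (induction p)
  case 0 then show ?case by (simp add: sf_0)
next
  case (pCons a p)
  have "a \<in> E" using pCons.prems by (metis coeff_pCons_0 po_coeff)
  moreover have "poly_over E p" using pCons.prems unfolding poly_over_def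
    by (metis coeff_pCons_Suc)
  ultimately show ?case using pCons by (simp add: pcompose_pCons po_add po_const po_mult)
qed
lemma po_lead_inv: "is_subfield E \<Longrightarrow> poly_over E p \<Longrightarrow> poly_over E (smult (inverse (lead_coeff p)) p)"
  by (simp add: po_coeff po_smult sf_inverse)

lemma poly_in_sf: "is_subfield E \<Longrightarrow> poly_over E p \<Longrightarrow> x \<in> E \<Longrightarrow> poly p x \<in> E"
  unfolding poly_altdef by (auto intro!: sf_sum sf_mult sf_power po_coeff)

lemma po_pCons_iff: "poly_over E (pCons a p) \<longleftrightarrow> a \<in> E \<and> poly_over E p"
  unfolding poly_over_def by (metis coeff_pCons_0 coeff_pCons_Suc not0_implies_Suc)

lemma po_divmod_exists:
  assumes E: "is_subfield E" and q: "poly_over E q" "q \<noteq> 0"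
  shows "poly_over E p \<Longrightarrow> \<exists>s r. poly_over E s \<and> poly_over E r \<and> p = s * q + r \<and> (r = 0 \<or> degree r < degree q)"
proof (induction "degree p" arbitrary: p rule: less_induct)
  case (less p)
  show ?case
  proof (cases "p = 0 \<or> degree p < degree q")
    case True
    then show ?thesis using less.prems E by (intro exI[of _ 0] exI[of _ p]) (auto simp: sf_0)
  next
    case False
    hence p0: "p \<noteq> 0" and dq: "degree q \<le> degree p" by auto
    define c where "c = lead_coeff p / lead_coeff q"
    define m where "m = monom c (degree p - degree q)"
    define p' where "p' = p - m * q"
    have cE: "c \<in> E" unfolding c_def using less.prems q E by (simp add: po_coeff sf_divide)
    have mE: "poly_over E m" unfolding m_def using cE E by (simp add: po_monom)
    have p'E: "poly_over E p'" unfolding p'_def using mE less.prems q E by (simp add: po_diff po_mult)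
    have c0: "c \<noteq> 0" unfolding c_def using p0 q by simp
    have dm: "degree (m * q) = degree p"
      unfolding m_def using c0 q dq by (simp add: degree_mult_eq degree_monom_eq)
    have lm: "lead_coeff (m * q) = lead_coeff p"
    proof -
      have "lead_coeff (m * q) = lead_coeff m * lead_coeff q" by (simp add: lead_coeff_mult)
      also have "lead_coeff m = c" unfolding m_def using c0 by (simp add: degree_monom_eq)
      finally show ?thesis unfolding c_def using q by simp
    qed
    have "p' = 0 \<or> degree p' < degree p"
    proof (cases "p' = 0")
      case False
      have "degree p' \<le> degree p" unfolding p'_def using dm by (metis degree_diff_le le_refl)
      moreover have "coeff p' (degree p) = 0" unfolding p'_def using dm lm by simp
      ultimately show ?thesis using False by (metis le_neq_implies_less leading_coeff_0_iff)
    qed simp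
    then show ?thesis
    proof
      assume "p' = 0"
      then show ?thesis using mE E by (intro exI[of _ m] exI[of _ 0]) (auto simp: p'_def sf_0)
    next
      assume "degree p' < degree p"
      from less.hyps[OF this p'E] obtain s r where sr: "poly_over E s" "poly_over E r" "p' = s * q + r"
        "r = 0 \<or> degree r < degree q" by blast
      show ?thesis using sr mE E
        by (intro exI[of _ "s + m"] exI[of _ r]) (auto simp: po_add p'_def algebra_simps)
    qed
  qed
qed

lemma po_div_mod:
  assumes E: "is_subfield E" and q: "poly_over E q" and p: "poly_over E p"
  shows "poly_over E (p div q)" "poly_over E (p mod q)"
proof -
  have "poly_over E (p div q) \<and> poly_over E (p mod q)"
  proof (cases "q = 0")
    case True then show ?thesis using p E by (simp add: sf_0)
  next
    case False
    obtain s r where sr: "poly_over E s" "poly_over E r" "p = s * q + r" "r = 0 \<or> degree r < degree q"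
      using po_divmod_exists[OF E q False p] by blast
    have "(p div q, p mod q) = (s, r)"
    proof (rule euclidean_relation_polyI)
      assume "q dvd p"
      then have "q dvd r" using sr(3) by (simp add: dvd_add_right_iff)
      then show "r = 0 \<and> p = s * q" using sr(3,4) False
        by (metis add.right_neutral dvd_imp_degree_le linorder_not_le)
    next
      assume "\<not> q dvd p"
      then have "r \<noteq> 0" using sr(3) by auto
      then show "degree r < degree q \<and> p = s * q + r" using sr by auto
    qed (use False in auto)
    then show ?thesis using sr by auto
  qed
  then show "poly_over E (p div q)" "poly_over E (p mod q)" by auto
qed


section \<open>Linear algebra over subfields\<close>

definition fam_indep :: "'a::field set \<Rightarrow> 'b set \<Rightarrow> ('b \<Rightarrow> 'a) \<Rightarrow> bool" where
  "fam_indep E I f \<longleftrightarrow> finite I \<and> (\<forall>d. (\<forall>i\<in>I. d i \<in> E) \<and> (\<Sum>i\<in>I. d i * f i) = 0 \<longrightarrow> (\<forall>i\<in>I. d i = 0))"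

definition subsp :: "'a::field set \<Rightarrow> 'a set \<Rightarrow> bool" where
  "subsp E V \<longleftrightarrow> 0 \<in> V \<and> (\<forall>x\<in>V. \<forall>y\<in>V. x + y \<in> V) \<and> (\<forall>c\<in>E. \<forall>x\<in>V. c * x \<in> V)"

lemma fam_indepD: "fam_indep E I f \<Longrightarrow> (\<And>i. i \<in> I \<Longrightarrow> d i \<in> E) \<Longrightarrow> (\<Sum>i\<in>I. d i * f i) = 0 \<Longrightarrow> i \<in> I \<Longrightarrow> d i = 0"
  unfolding fam_indep_def by blast

lemma lin_indepD: "lin_indep_over E S \<Longrightarrow> (\<And>i. i \<in> S \<Longrightarrow> d i \<in> E) \<Longrightarrow> (\<Sum>i\<in>S. d i * i) = 0 \<Longrightarrow> i \<in> S \<Longrightarrow> d i = 0"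
  unfolding lin_indep_over_def by blast

lemma fam_indep_inj:
  assumes E: "is_subfield E" and fi: "fam_indep E I f" shows "inj_on f I"
proof (rule inj_onI, rule ccontr)
  fix i j assume ij: "i \<in> I" "j \<in> I" "f i = f j" "i \<noteq> j"
  define d where "d = (\<lambda>k. if k = i then 1 else if k = j then -1 else (0::'a))"
  have fin: "finite I" using fi fam_indep_def by blast
  have "(\<Sum>k\<in>I. d k * f k) = (\<Sum>k\<in>I. (if k = i then f k else 0) - (if k = j then f k else 0))"
    by (rule sum.cong) (use ij(4) in \<open>auto simp: d_def\<close>)
  also have "\<dots> = f i - f j" using fin ij by (simp add: sum_subtractf)
  finally have "(\<Sum>k\<in>I. d k * f k) = 0" using ij by simp
  moreover have "\<And>k. k \<in> I \<Longrightarrow> d k \<in> E" using E by (auto simp: d_def sf_0 sf_1 sf_uminus)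
  ultimately have "d i = 0" using fam_indepD[OF fi, of d i] ij(1) by simp
  then show False by (simp add: d_def)
qed

lemma fam_indep_set:
  assumes E: "is_subfield E" and fi: "fam_indep E I f"
  shows "lin_indep_over E (f ` I)" "card (f ` I) = card I"
proof -
  have inj: "inj_on f I" by (rule fam_indep_inj[OF E fi])
  have fin: "finite I" using fi fam_indep_def by blast
  show "card (f ` I) = card I" using inj by (simp add: card_image)
  show "lin_indep_over E (f ` I)" unfolding lin_indep_over_def
  proof (intro conjI allI impI)
    show "finite (f ` I)" using fin by simp
    fix c assume c: "(\<forall>s\<in>f ` I. c s \<in> E) \<and> (\<Sum>s\<in>f ` I. c s * s) = 0"
    have "(\<Sum>s\<in>f ` I. c s * s) = (\<Sum>i\<in>I. c (f i) * f i)"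
      using sum.reindex[OF inj, of "\<lambda>s. c s * s"] by (simp add: o_def)
    then have z: "(\<Sum>i\<in>I. c (f i) * f i) = 0" using c by simp
    have "\<And>i. i \<in> I \<Longrightarrow> c (f i) = 0"
      by (rule fam_indepD[OF fi, of "\<lambda>i. c (f i)"]) (use c z in auto)
    then show "\<forall>s\<in>f ` I. c s = 0" by blast
  qed
qed

lemma lin_indep_fam: "lin_indep_over E S \<longleftrightarrow> fam_indep E S (\<lambda>x. x)"
  unfolding lin_indep_over_def fam_indep_def by simp

lemma subsp_sum: "subsp E V \<Longrightarrow> (\<And>i. i \<in> A \<Longrightarrow> c i \<in> E) \<Longrightarrow> (\<And>i. i \<in> A \<Longrightarrow> f i \<in> V) \<Longrightarrow> (\<Sum>i\<in>A. c i * f i) \<in> V"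
  by (induction A rule: infinite_finite_induct) (auto simp: subsp_def)

lemma span_subsp: assumes E: "is_subfield E" shows "subsp E (span_over E S)"
  unfolding subsp_def span_over_def
proof (intro conjI ballI)
  show "0 \<in> {x. \<exists>c. (\<forall>s\<in>S. c s \<in> E) \<and> x = (\<Sum>s\<in>S. c s * s)}"
    using E by (intro CollectI exI[of _ "\<lambda>_. 0"]) (auto simp: sf_0)
next
  fix x y assume "x \<in> {x. \<exists>c. (\<forall>s\<in>S. c s \<in> E) \<and> x = (\<Sum>s\<in>S. c s * s)}"
    "y \<in> {x. \<exists>c. (\<forall>s\<in>S. c s \<in> E) \<and> x = (\<Sum>s\<in>S. c s * s)}"
  then obtain c d where "\<forall>s\<in>S. c s \<in> E" "x = (\<Sum>s\<in>S. c s * s)" "\<forall>s\<in>S. d s \<in> E" "y = (\<Sum>s\<in>S. d s * s)"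
    by blast
  then show "x + y \<in> {x. \<exists>c. (\<forall>s\<in>S. c s \<in> E) \<and> x = (\<Sum>s\<in>S. c s * s)}"
    using E by (intro CollectI exI[of _ "\<lambda>s. c s + d s"]) (auto simp: sf_add sum.distrib algebra_simps)
next
  fix a x assume a: "a \<in> E" and "x \<in> {x. \<exists>c. (\<forall>s\<in>S. c s \<in> E) \<and> x = (\<Sum>s\<in>S. c s * s)}"
  then obtain c where "\<forall>s\<in>S. c s \<in> E" "x = (\<Sum>s\<in>S. c s * s)" by blast
  then show "a * x \<in> {x. \<exists>c. (\<forall>s\<in>S. c s \<in> E) \<and> x = (\<Sum>s\<in>S. c s * s)}"
    using E a by (intro CollectI exI[of _ "\<lambda>s. a * c s"]) (auto simp: sf_mult sum_distrib_left mult.assoc)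
qed

lemma span_memI: "(\<And>s. s \<in> S \<Longrightarrow> c s \<in> E) \<Longrightarrow> (\<Sum>s\<in>S. c s * s) \<in> span_over E S"
  unfolding span_over_def by blast

lemma span_memE: "x \<in> span_over E S \<Longrightarrow> (\<And>c. (\<And>s. s \<in> S \<Longrightarrow> c s \<in> E) \<Longrightarrow> x = (\<Sum>s\<in>S. c s * s) \<Longrightarrow> P) \<Longrightarrow> P"
  unfolding span_over_def by blast

lemma span_min: assumes "subsp E V" "S \<subseteq> V" shows "span_over E S \<subseteq> V"
proof
  fix x assume "x \<in> span_over E S"
  then obtain c where c: "\<And>s. s \<in> S \<Longrightarrow> c s \<in> E" "x = (\<Sum>s\<in>S. c s * s)"
    using \<open>x \<in> span_over E S\<close> unfolding span_over_def by blast
  show "x \<in> V" unfolding c(2) by (rule subsp_sum[OF assms(1) c(1)]) (use assms(2) in auto)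
qed

lemma span_sup: assumes E: "is_subfield E" and fin: "finite S" shows "S \<subseteq> span_over E S"
proof
  fix x assume x: "x \<in> S"
  have "(\<Sum>s\<in>S. (if s = x then 1 else 0) * s) = x"
  proof -
    have "(\<Sum>s\<in>S. (if s = x then 1 else 0) * s) = (\<Sum>s\<in>S. if s = x then s else 0)"
      by (rule sum.cong) auto
    also have "\<dots> = x" using fin x by simp
    finally show ?thesis .
  qed
  moreover have "\<And>s. (if s = x then 1 else 0) \<in> E" using E by (simp add: sf_0 sf_1)
  ultimately show "x \<in> span_over E S" using span_memI[of S "\<lambda>s. if s = x then 1 else 0" E] by metis
qed

lemma span_mono: "is_subfield E \<Longrightarrow> finite T \<Longrightarrow> S \<subseteq> T \<Longrightarrow> span_over E S \<subseteq> span_over E T"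
  by (meson span_min span_subsp span_sup order_trans)

lemma span_mono_field: "E \<subseteq> F \<Longrightarrow> span_over E S \<subseteq> span_over F S"
  unfolding span_over_def by blast

lemma span_empty: "span_over E {} = {0}"
  unfolding span_over_def by simp

lemma indep_finite: "lin_indep_over E S \<Longrightarrow> finite S" by (simp add: lin_indep_over_def)

lemma indep_subset:
  assumes E: "is_subfield E" and T: "lin_indep_over E T" and ST: "S \<subseteq> T"
  shows "lin_indep_over E S"
  unfolding lin_indep_over_def
proof (intro conjI allI impI)
  show fS: "finite S" using ST T finite_subset indep_finite by blast
  fix c assume c: "(\<forall>s\<in>S. c s \<in> E) \<and> (\<Sum>s\<in>S. c s * s) = 0"
  define c' where "c' = (\<lambda>s. if s \<in> S then c s else 0)"
  have "(\<Sum>s\<in>T. c' s * s) = (\<Sum>s\<in>S. c' s * s)"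
    using ST indep_finite[OF T] by (intro sum.mono_neutral_right) (auto simp: c'_def)
  also have "\<dots> = 0" using c by (simp add: c'_def)
  finally have "\<forall>s\<in>T. c' s = 0" using lin_indepD[OF T, of c'] c E by (auto simp: c'_def sf_0)
  then show "\<forall>s\<in>S. c s = 0" using ST unfolding c'_def by (metis subsetD)
qed

lemma indep_zero: assumes E: "is_subfield E" and S: "lin_indep_over E S" shows "0 \<notin> S"
proof
  assume z: "0 \<in> S"
  have "(\<Sum>s\<in>S. (if s = 0 then 1 else 0) * s) = 0" by (rule sum.neutral) auto
  then have "(if (0::'a) = 0 then 1 else 0) = (0::'a)"
    using lin_indepD[OF S, of "\<lambda>s. if s = 0 then 1 else 0" 0] z sf_0[OF E] sf_1[OF E] by presburger
  then show False by simp
qed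

lemma indep_insert:
  assumes E: "is_subfield E" and S: "lin_indep_over E S" and x: "x \<notin> span_over E S"
  shows "lin_indep_over E (insert x S)"
  unfolding lin_indep_over_def
proof (intro conjI allI impI)
  have fS: "finite S" using S indep_finite by blast
  then show "finite (insert x S)" by simp
  have xS: "x \<notin> S" using x span_sup[OF E fS] by blast
  fix c assume c: "(\<forall>s\<in>insert x S. c s \<in> E) \<and> (\<Sum>s\<in>insert x S. c s * s) = 0"
  then have eq: "c x * x + (\<Sum>s\<in>S. c s * s) = 0" using fS xS by simp
  have cx: "c x = 0"
  proof (rule ccontr)
    assume cx: "c x \<noteq> 0"
    have "x = (\<Sum>s\<in>S. (- c s / c x) * s)"
    proof -
      have "(\<Sum>s\<in>S. (- c s / c x) * s) = - (\<Sum>s\<in>S. c s * s) / c x"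
        by (simp add: sum_divide_distrib sum_negf)
      also have "\<dots> = x" using eq cx by (simp add: field_simps add_eq_0_iff)
      finally show ?thesis by simp
    qed
    moreover have "\<And>s. s \<in> S \<Longrightarrow> - c s / c x \<in> E" using c E by (auto intro!: sf_divide sf_uminus)
    ultimately have "x \<in> span_over E S" using span_memI[of S "\<lambda>s. - c s / c x" E] by metis
    then show False using x by blast
  qed
  then have "(\<Sum>s\<in>S. c s * s) = 0" using eq by simp
  then have "\<forall>s\<in>S. c s = 0" using lin_indepD[OF S, of c] c by blast
  then show "\<forall>s\<in>insert x S. c s = 0" using cx by blast
qed

lemma exchange:
  assumes E: "is_subfield E" and fT: "finite T"
  shows "S \<subseteq> span_over E T \<Longrightarrow> lin_indep_over E S \<Longrightarrow> card S \<le> card T"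
  using fT
proof (induction T arbitrary: S rule: finite_induct)
  case empty
  then have "S \<subseteq> {0}" by (simp add: span_empty)
  then have "S = {}" using indep_zero[OF E empty.prems(2)] by blast
  then show ?case by simp
next
  case (insert t T)
  have fS: "finite S" using insert.prems indep_finite by blast
  have "\<forall>s\<in>S. \<exists>cf. (\<forall>u\<in>insert t T. cf u \<in> E) \<and> s = (\<Sum>u\<in>insert t T. cf u * u)"
    using insert.prems(1) unfolding span_over_def by blast
  then obtain C where C: "\<And>s u. s \<in> S \<Longrightarrow> u \<in> insert t T \<Longrightarrow> C s u \<in> E"
    "\<And>s. s \<in> S \<Longrightarrow> s = (\<Sum>u\<in>insert t T. C s u * u)"
    by metis
  have Cs: "\<And>s. s \<in> S \<Longrightarrow> s = C s t * t + (\<Sum>u\<in>T. C s u * u)"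
    using C(2) insert.hyps by simp
  show ?case
  proof (cases "\<forall>s\<in>S. C s t = 0")
    case True
    have "S \<subseteq> span_over E T"
    proof
      fix s assume s: "s \<in> S"
      then have "s = (\<Sum>u\<in>T. C s u * u)" using Cs True by force
      then show "s \<in> span_over E T" using span_memI[of T "C s" E] C(1)[OF s] by auto
    qed
    then have "card S \<le> card T" using insert.IH insert.prems(2) by blast
    then show ?thesis using insert.hyps by simp
  next
    case False
    then obtain s0 where s0: "s0 \<in> S" "C s0 t \<noteq> 0" by blast
    define a where "a = C s0 t"
    define S' where "S' = S - {s0}"
    define \<phi> where "\<phi> = (\<lambda>s. s - (C s t / a) * s0)"
    have aE: "a \<in> E" unfolding a_def using C(1) s0 by simp
    have a0: "a \<noteq> 0" using s0 a_def by simp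
    have phi_span: "\<phi> s \<in> span_over E T" if s: "s \<in> S" for s
    proof -
      have "(\<Sum>u\<in>T. (C s u - (C s t / a) * C s0 u) * u) = (\<Sum>u\<in>T. C s u * u) - (C s t / a) * (\<Sum>u\<in>T. C s0 u * u)"
        by (simp add: algebra_simps sum_subtractf sum_distrib_left)
      also have "\<dots> = (s - C s t * t) - (C s t / a) * (s0 - a * t)"
      proof -
        have h1: "(\<Sum>u\<in>T. C s u * u) = s - C s t * t" using Cs[OF s] by (simp add: algebra_simps)
        have h2: "(\<Sum>u\<in>T. C s0 u * u) = s0 - a * t" using Cs[OF s0(1)] by (simp add: a_def algebra_simps)
        show ?thesis by (simp only: h1 h2)
      qed
      also have "\<dots> = \<phi> s" unfolding \<phi>_def using a0 by (simp add: field_simps)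
      finally have eq: "\<phi> s = (\<Sum>u\<in>T. (C s u - (C s t / a) * C s0 u) * u)" by simp
      have "\<And>u. u \<in> T \<Longrightarrow> C s u - (C s t / a) * C s0 u \<in> E"
        using C(1) s s0 aE E by (auto intro!: sf_diff sf_mult sf_divide)
      then show ?thesis using eq span_memI[of T "\<lambda>u. C s u - (C s t / a) * C s0 u" E] by metis
    qed
    have fi: "fam_indep E S' \<phi>"
      unfolding fam_indep_def
    proof (intro conjI allI impI)
      show "finite S'" using fS S'_def by simp
      fix d assume d: "(\<forall>i\<in>S'. d i \<in> E) \<and> (\<Sum>i\<in>S'. d i * \<phi> i) = 0"
      define k where "k = (\<Sum>s\<in>S'. d s * (C s t / a))"
      define e where "e = (\<lambda>u. if u = s0 then - k else d u)"
      have "(\<Sum>i\<in>S'. d i * \<phi> i) = (\<Sum>i\<in>S'. d i * i) - k * s0"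
        unfolding \<phi>_def k_def by (simp add: algebra_simps sum_subtractf sum_distrib_right sum_distrib_left sum_divide_distrib)
      then have z: "(\<Sum>i\<in>S'. d i * i) - k * s0 = 0" using d by simp
      have "(\<Sum>u\<in>S. e u * u) = e s0 * s0 + (\<Sum>u\<in>S'. e u * u)"
        unfolding S'_def using fS s0 by (simp add: sum.remove)
      also have "(\<Sum>u\<in>S'. e u * u) = (\<Sum>u\<in>S'. d u * u)"
        by (rule sum.cong) (auto simp: e_def S'_def)
      finally have "(\<Sum>u\<in>S. e u * u) = 0" using z by (simp add: e_def)
      moreover have "\<And>u. u \<in> S \<Longrightarrow> e u \<in> E"
      proof -
        fix u assume "u \<in> S"
        have "k \<in> E" unfolding k_def using d C(1) aE E
          by (auto intro!: sf_sum sf_mult sf_divide simp: S'_def)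
        then show "e u \<in> E" using d \<open>u \<in> S\<close> E by (auto simp: e_def S'_def sf_uminus)
      qed
      ultimately have "\<forall>u\<in>S. e u = 0" using lin_indepD[OF insert.prems(2), of e] by blast
      then show "\<forall>i\<in>S'. d i = 0" unfolding e_def S'_def by (metis DiffE singletonI)
    qed
    have "lin_indep_over E (\<phi> ` S')" "card (\<phi> ` S') = card S'"
      using fam_indep_set[OF E fi] by auto
    moreover have "\<phi> ` S' \<subseteq> span_over E T" using phi_span S'_def by auto
    ultimately have "card S' \<le> card T" using insert.IH by metis
    then have "card S \<le> Suc (card T)" using s0 fS S'_def by (simp add: card_Diff_singleton)
    then show ?thesis using insert.hyps by simp
  qed
qed

lemma basis_exists:
  assumes E: "is_subfield E" and fT: "finite T" and V: "subsp E V" and VT: "V \<subseteq> span_over E T"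
  shows "\<exists>B. is_basis_over E V B \<and> card B \<le> card T"
proof -
  define P where "P = (\<lambda>n. \<exists>B. B \<subseteq> V \<and> lin_indep_over E B \<and> card B = n)"
  have P0: "P 0" unfolding P_def by (intro exI[of _ "{}"]) (simp add: lin_indep_over_def)
  have Pb: "\<forall>n. P n \<longrightarrow> n \<le> card T"
    unfolding P_def using exchange[OF E fT] VT by blast
  obtain n where n: "P n" "\<forall>m. P m \<longrightarrow> m \<le> n" using Nat.ex_has_greatest_nat[OF P0 Pb] by blast
  then obtain B where B: "B \<subseteq> V" "lin_indep_over E B" "card B = n" unfolding P_def by blast
  have fB: "finite B" using B indep_finite by blast
  have "V \<subseteq> span_over E B"
  proof
    fix v assume v: "v \<in> V"
    show "v \<in> span_over E B"
    proof (rule ccontr)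
      assume nv: "v \<notin> span_over E B"
      then have "v \<notin> B" using span_sup[OF E fB] by blast
      have "P (Suc n)" unfolding P_def using indep_insert[OF E B(2) nv] B v \<open>v \<notin> B\<close> fB
        by (intro exI[of _ "insert v B"]) auto
      then show False using n by fastforce
    qed
  qed
  moreover have "span_over E B \<subseteq> V" using span_min[OF V B(1)] .
  ultimately show ?thesis using B Pb n unfolding is_basis_over_def by auto
qed

lemma basis_card_eq:
  assumes E: "is_subfield E" and B1: "is_basis_over E F B1" and B2: "is_basis_over E F B2"
  shows "card B1 = card B2"
proof -
  have f1: "finite B1" "finite B2" using B1 B2 indep_finite unfolding is_basis_over_def by auto
  have "card B1 \<le> card B2" using exchange[OF E f1(2), of B1] B1 B2 unfolding is_basis_over_def by auto
  moreover have "card B2 \<le> card B1" using exchange[OF E f1(1), of B2] B1 B2 unfolding is_basis_over_def by auto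
  ultimately show ?thesis by simp
qed

lemma ext_degree_eq: "is_subfield E \<Longrightarrow> is_basis_over E F B \<Longrightarrow> ext_degree E F = card B"
  unfolding ext_degree_def by (metis (mono_tags, lifting) basis_card_eq someI)

lemma basis_finite: "is_basis_over E F B \<Longrightarrow> finite B"
  unfolding is_basis_over_def using indep_finite by blast

lemma indep_le_degree:
  assumes E: "is_subfield E" and B: "is_basis_over E F B" and S: "S \<subseteq> F" "lin_indep_over E S"
  shows "card S \<le> ext_degree E F"
  using exchange[OF E basis_finite[OF B], of S] S B ext_degree_eq[OF E B] unfolding is_basis_over_def by auto

lemma indep_full_basis:
  assumes E: "is_subfield E" and B: "is_basis_over E F B" and S: "S \<subseteq> F" "lin_indep_over E S"
    and c: "card S = ext_degree E F"
  shows "is_basis_over E F S"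
proof -
  have sF: "subsp E F" using B span_subsp[OF E] unfolding is_basis_over_def by metis
  have fS: "finite S" using S indep_finite by blast
  have "F \<subseteq> span_over E S"
  proof
    fix v assume v: "v \<in> F"
    show "v \<in> span_over E S"
    proof (rule ccontr)
      assume nv: "v \<notin> span_over E S"
      then have "v \<notin> S" using span_sup[OF E fS] by blast
      have "card (insert v S) \<le> ext_degree E F"
        using indep_le_degree[OF E B _ indep_insert[OF E S(2) nv]] v S by auto
      then show False using c fS \<open>v \<notin> S\<close> by simp
    qed
  qed
  then show ?thesis using span_min[OF sF S(1)] S unfolding is_basis_over_def by auto
qed


lemma fam_span:
  assumes inj: "inj_on f I" and d: "\<And>i. i \<in> I \<Longrightarrow> d i \<in> E"
  shows "(\<Sum>i\<in>I. d i * f i) \<in> span_over E (f ` I)"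
proof -
  define c where "c = (\<lambda>v. d (the_inv_into I f v))"
  have "(\<Sum>v\<in>f ` I. c v * v) = (\<Sum>i\<in>I. c (f i) * f i)"
    using sum.reindex[OF inj, of "\<lambda>v. c v * v"] by (simp add: o_def)
  also have "\<dots> = (\<Sum>i\<in>I. d i * f i)"
    by (rule sum.cong) (auto simp: c_def the_inv_into_f_f[OF inj])
  finally have eq: "(\<Sum>i\<in>I. d i * f i) = (\<Sum>v\<in>f ` I. c v * v)" by simp
  have "\<And>v. v \<in> f ` I \<Longrightarrow> c v \<in> E"
    using d by (auto simp: c_def the_inv_into_f_f[OF inj])
  then show ?thesis unfolding eq by (rule span_memI)
qed

lemma sf_subsp: "is_subfield F \<Longrightarrow> E \<subseteq> F \<Longrightarrow> subsp E F"
  unfolding subsp_def by (auto simp: sf_0 sf_add sf_mult)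

lemma finite_extD: "finite_ext E F \<Longrightarrow> is_subfield E \<and> is_subfield F \<and> E \<subseteq> F"
  by (simp add: finite_ext_def)

lemma finite_ext_basis: "finite_ext E F \<Longrightarrow> \<exists>B. is_basis_over E F B \<and> ext_degree E F = card B"
  unfolding finite_ext_def using ext_degree_eq by blast

lemma ext_degree_pos: assumes "finite_ext E F" shows "ext_degree E F \<ge> 1"
proof -
  obtain B where B: "is_basis_over E F B" "ext_degree E F = card B" using finite_ext_basis[OF assms] by blast
  have "1 \<in> F" using assms sf_1 finite_extD by blast
  then have "B \<noteq> {}" using B(1) unfolding is_basis_over_def by (auto simp: span_empty)
  then show ?thesis using B basis_finite[OF B(1)] by (simp add: Suc_le_eq card_gt_0_iff)
qed

lemma finite_ext_sub:
  assumes KP: "finite_ext K P" and E: "is_subfield E" "K \<subseteq> E" "E \<subseteq> P"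
  shows "finite_ext K E" "finite_ext E P"
proof -
  obtain B where B: "is_basis_over K P B" using KP unfolding finite_ext_def by blast
  have K: "is_subfield K" and P: "is_subfield P" using KP finite_extD by auto
  have fB: "finite B" using basis_finite[OF B] .
  have "E \<subseteq> span_over K B" using B E unfolding is_basis_over_def by auto
  then obtain C where "is_basis_over K E C" using basis_exists[OF K fB sf_subsp[OF E(1,2)]] by blast
  then show "finite_ext K E" using K E unfolding finite_ext_def by blast
  have "P \<subseteq> span_over E B" using B span_mono_field[OF E(2)] unfolding is_basis_over_def by auto
  then obtain C where "is_basis_over E P C" using basis_exists[OF E(1) fB sf_subsp[OF P E(3)]] by blast
  then show "finite_ext E P" using P E unfolding finite_ext_def by blast
qed

lemma tower:
  assumes KP: "finite_ext K P" and E: "is_subfield E" "K \<subseteq> E" "E \<subseteq> P"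
  shows "ext_degree K P = ext_degree E P * ext_degree K E"
proof -
  have K: "is_subfield K" and P: "is_subfield P" using KP finite_extD by auto
  obtain B where B: "is_basis_over E P B" "ext_degree E P = card B"
    using finite_ext_basis[OF finite_ext_sub(2)[OF assms]] by blast
  obtain C where C: "is_basis_over K E C" "ext_degree K E = card C"
    using finite_ext_basis[OF finite_ext_sub(1)[OF assms]] by blast
  have fB: "finite B" and fC: "finite C" using B C basis_finite by auto
  have BP: "B \<subseteq> P" and CE: "C \<subseteq> E" using B(1) C(1) unfolding is_basis_over_def by auto
  define f where "f = (\<lambda>(b::'a, c::'a). b * c)"
  have fP: "f x \<in> P" if xBC: "x \<in> B \<times> C" for x
  proof -
    obtain b c where bc: "x = (b, c)" "b \<in> B" "c \<in> C" using xBC by blast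
    then have "b \<in> P" "c \<in> P" using BP CE E(3) by auto
    then show ?thesis unfolding f_def bc using sf_mult[OF P] by simp
  qed
  have fi: "fam_indep K (B \<times> C) f"
    unfolding fam_indep_def
  proof (intro conjI allI impI)
    show "finite (B \<times> C)" using fB fC by simp
    fix d assume d: "(\<forall>i\<in>B \<times> C. d i \<in> K) \<and> (\<Sum>i\<in>B \<times> C. d i * f i) = 0"
    have "(\<Sum>b\<in>B. (\<Sum>c\<in>C. d (b, c) * c) * b) = (\<Sum>b\<in>B. \<Sum>c\<in>C. d (b, c) * (b * c))"
      by (simp add: sum_distrib_left sum_distrib_right mult_ac)
    also have "\<dots> = (\<Sum>(b, c)\<in>B \<times> C. d (b, c) * (b * c))" by (rule sum.cartesian_product)
    also have "\<dots> = (\<Sum>i\<in>B \<times> C. d i * f i)" by (simp add: f_def split_def)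
    finally have "(\<Sum>i\<in>B \<times> C. d i * f i) = (\<Sum>b\<in>B. (\<Sum>c\<in>C. d (b, c) * c) * b)" by simp
    then have z: "(\<Sum>b\<in>B. (\<Sum>c\<in>C. d (b, c) * c) * b) = 0" using d by simp
    have inE: "(\<Sum>c\<in>C. d (b, c) * c) \<in> E" if "b \<in> B" for b
    proof -
      have "(\<Sum>c\<in>C. d (b, c) * c) \<in> span_over K C" by (rule span_memI) (use d that in auto)
      then show ?thesis using C(1) unfolding is_basis_over_def by blast
    qed
    have BI: "lin_indep_over E B" "lin_indep_over K C" using B(1) C(1) unfolding is_basis_over_def by auto
    have B0: "(\<Sum>c\<in>C. d (b, c) * c) = 0" if "b \<in> B" for b
      by (rule lin_indepD[OF BI(1), of "\<lambda>b. \<Sum>c\<in>C. d (b, c) * c" b]) (use inE z that in auto)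
    show "\<forall>i\<in>B \<times> C. d i = 0"
    proof
      fix i assume i: "i \<in> B \<times> C"
      then obtain b c where bc: "i = (b, c)" "b \<in> B" "c \<in> C" by blast
      have "d (b, c) = 0"
        by (rule lin_indepD[OF BI(2), of "\<lambda>c. d (b, c)" c]) (use B0[OF bc(2)] bc d in auto)
      then show "d i = 0" using bc by simp
    qed
  qed
  have inj: "inj_on f (B \<times> C)" using fam_indep_inj[OF K fi] .
  have "is_basis_over K P (f ` (B \<times> C))"
    unfolding is_basis_over_def
  proof (intro conjI)
    show "f ` (B \<times> C) \<subseteq> P" using fP by auto
    show "lin_indep_over K (f ` (B \<times> C))" using fam_indep_set[OF K fi] by simp
    show "span_over K (f ` (B \<times> C)) = P"
    proof
      show "span_over K (f ` (B \<times> C)) \<subseteq> P"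
        by (rule span_min[OF sf_subsp[OF P]]) (use fP E in auto)
      show "P \<subseteq> span_over K (f ` (B \<times> C))"
      proof
        fix x assume "x \<in> P"
        then obtain e where e: "\<And>b. b \<in> B \<Longrightarrow> e b \<in> E" "x = (\<Sum>b\<in>B. e b * b)"
          using B(1) unfolding is_basis_over_def span_over_def by blast
        have "\<forall>b\<in>B. \<exists>k. (\<forall>c\<in>C. k c \<in> K) \<and> e b = (\<Sum>c\<in>C. k c * c)"
          using e(1) C(1) unfolding is_basis_over_def span_over_def by blast
        then obtain k where k: "\<And>b c. b \<in> B \<Longrightarrow> c \<in> C \<Longrightarrow> k b c \<in> K"
          "\<And>b. b \<in> B \<Longrightarrow> e b = (\<Sum>c\<in>C. k b c * c)" by metis
        have "x = (\<Sum>b\<in>B. (\<Sum>c\<in>C. k b c * c) * b)" using e(2) k(2) by simp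
        also have "\<dots> = (\<Sum>b\<in>B. \<Sum>c\<in>C. k b c * (b * c))"
          by (simp add: sum_distrib_left sum_distrib_right mult_ac)
        also have "\<dots> = (\<Sum>(b, c)\<in>B \<times> C. k b c * (b * c))" by (rule sum.cartesian_product)
        also have "\<dots> = (\<Sum>i\<in>B \<times> C. (case i of (b, c) \<Rightarrow> k b c) * f i)" by (simp add: f_def split_def)
        finally show "x \<in> span_over K (f ` (B \<times> C))"
          using fam_span[OF inj, of "\<lambda>i. case i of (b, c) \<Rightarrow> k b c" K] k(1) by auto
      qed
    qed
  qed
  then have "ext_degree K P = card (f ` (B \<times> C))" using ext_degree_eq[OF K] by blast
  also have "\<dots> = card B * card C" using card_image[OF inj] by (simp add: card_cartesian_product)
  finally show ?thesis using B C by simp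
qed

lemma nat_aux1: "(x::nat) = y * x \<Longrightarrow> x \<ge> 1 \<Longrightarrow> y = 1" by simp
lemma nat_aux2: "(x::nat) = x * y \<Longrightarrow> x \<ge> 1 \<Longrightarrow> y = 1" by simp
lemma nat_aux3: "(x::nat) = y * z \<Longrightarrow> z \<ge> 1 \<Longrightarrow> y \<le> x" by simp

lemma degree_one_eq:
  assumes EP: "finite_ext E P" and d: "ext_degree E P = 1" shows "P = E"
proof -
  obtain B where B: "is_basis_over E P B" "card B = 1" using finite_ext_basis[OF EP] d by auto
  then obtain b where b: "B = {b}" using card_1_singletonE by blast
  have E: "is_subfield E" and P: "is_subfield P" and EsP: "E \<subseteq> P" using EP finite_extD by auto
  have Pb: "P = {c * b | c. c \<in> E}" using B(1) unfolding b is_basis_over_def span_over_def by auto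
  obtain c where c: "c \<in> E" "1 = c * b" using Pb sf_1[OF P] by blast
  have "inverse c = b" using c(2) by (intro inverse_unique) simp
  then have bE: "b \<in> E" using sf_inverse[OF E c(1)] by simp
  have "P \<subseteq> E" using Pb bE E by (auto intro: sf_mult)
  then show ?thesis using EsP by blast
qed

lemma same_degree_eq:
  assumes KP: "finite_ext K P" and E: "is_subfield E" "K \<subseteq> E" "E \<subseteq> P"
    and d: "ext_degree K E = ext_degree K P"
  shows "E = P"
proof -
  have "ext_degree K E \<ge> 1" using ext_degree_pos[OF finite_ext_sub(1)[OF assms(1-4)]] .
  moreover have "ext_degree K P = ext_degree E P * ext_degree K E" using tower[OF assms(1-4)] .
  ultimately have "ext_degree E P = 1" using d nat_aux1 by metis
  then show ?thesis using degree_one_eq[OF finite_ext_sub(2)[OF assms(1-4)]] by simp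
qed

lemma same_degree_eq2:
  assumes EP: "finite_ext E P" and E': "is_subfield E'" "E \<subseteq> E'" "E' \<subseteq> P"
    and d: "ext_degree E' P = ext_degree E P"
  shows "E' = E"
proof -
  have "ext_degree E P = ext_degree E' P * ext_degree E E'" using tower[OF assms(1-4)] .
  then have "ext_degree E E' = 1" using d ext_degree_pos[OF EP] nat_aux2 by metis
  then show ?thesis using degree_one_eq[OF finite_ext_sub(1)[OF assms(1-4)]] by simp
qed

lemma degree_le_sub:
  assumes EP: "finite_ext E P" and E': "is_subfield E'" "E \<subseteq> E'" "E' \<subseteq> P"
  shows "ext_degree E' P \<le> ext_degree E P"
proof -
  have "ext_degree E P = ext_degree E' P * ext_degree E E'" using tower[OF assms] .
  moreover have "ext_degree E E' \<ge> 1" using ext_degree_pos[OF finite_ext_sub(1)[OF assms]] .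
  ultimately show ?thesis by (rule nat_aux3)
qed


section \<open>Minimal polynomials\<close>

definition alg_over :: "'a::field set \<Rightarrow> 'a \<Rightarrow> bool" where
  "alg_over E x \<longleftrightarrow> (\<exists>p. p \<noteq> 0 \<and> poly_over E p \<and> poly p x = 0)"

lemma coeff_sum_monom: "finite A \<Longrightarrow> coeff (\<Sum>i\<in>A. monom (d i) i) j = (if j \<in> A then (d j::'a::field) else 0)"
  by (simp add: coeff_sum coeff_monom)

lemma poly_sum_monom: "poly (\<Sum>i\<in>A. monom (d i) i) x = (\<Sum>i\<in>A. d i * (x::'a::field) ^ i)"
  by (simp add: poly_sum poly_monom)

lemma po_sum_monom: "is_subfield E \<Longrightarrow> (\<And>i. i \<in> A \<Longrightarrow> d i \<in> E) \<Longrightarrow> poly_over E (\<Sum>i\<in>A. monom (d i) i)"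
  by (rule po_sum) (auto intro: po_monom)

lemma degree_sum_monom_less: "(\<Sum>i<n. monom (d i::'a::field) i) \<noteq> 0 \<Longrightarrow> degree (\<Sum>i<n. monom (d i) i) < n"
proof -
  assume nz: "(\<Sum>i<n. monom (d i) i) \<noteq> 0"
  have "n \<noteq> 0"
  proof
    assume "n = 0" then show False using nz by simp
  qed
  moreover have "degree (\<Sum>i<n. monom (d i) i) \<le> n - 1"
    by (rule degree_le) (auto simp: coeff_sum_monom)
  ultimately show ?thesis by linarith
qed

lemma poly_as_sum:
  fixes p :: "'a::field poly"
  assumes "p = 0 \<or> degree p < n"
  shows "poly p x = (\<Sum>i<n. coeff p i * x ^ i)"
proof (cases "p = 0")
  case True then show ?thesis by simp
next
  case False
  then have dn: "degree p < n" using assms by simp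
  have "poly p x = (\<Sum>i\<le>degree p. coeff p i * x ^ i)" by (rule poly_altdef)
  also have "\<dots> = (\<Sum>i<n. coeff p i * x ^ i)"
    by (rule sum.mono_neutral_left) (use dn in \<open>auto simp: coeff_eq_0\<close>)
  finally show ?thesis .
qed

lemma mp_spec:
  assumes E: "is_subfield E" and a: "alg_over E x"
  shows "poly_over E (min_poly E x)" "lead_coeff (min_poly E x) = 1" "poly (min_poly E x) x = 0"
    "\<And>q. q \<noteq> 0 \<Longrightarrow> poly_over E q \<Longrightarrow> poly q x = 0 \<Longrightarrow> degree (min_poly E x) \<le> degree q"
proof -
  define P where "P = (\<lambda>n. \<exists>q. q \<noteq> 0 \<and> poly_over E q \<and> poly q x = 0 \<and> degree q = n)"
  obtain q0 where "q0 \<noteq> 0 \<and> poly_over E q0 \<and> poly q0 x = 0" using a alg_over_def by blast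
  then have "P (degree q0)" unfolding P_def by blast
  then have Pn: "P (LEAST n. P n)" by (rule LeastI)
  then obtain q where q: "q \<noteq> 0" "poly_over E q" "poly q x = 0" "degree q = (LEAST n. P n)"
    unfolding P_def by blast
  define p where "p = smult (inverse (lead_coeff q)) q"
  have p: "poly_over E p" "lead_coeff p = 1" "poly p x = 0" "degree p = degree q"
    unfolding p_def using po_lead_inv[OF E q(2)] q(1,3) by auto
  have pmin: "\<forall>r. r \<noteq> 0 \<and> poly_over E r \<and> poly r x = 0 \<longrightarrow> degree p \<le> degree r"
  proof (intro allI impI)
    fix r assume "r \<noteq> 0 \<and> poly_over E r \<and> poly r x = 0"
    then have "P (degree r)" unfolding P_def by blast
    then have "(LEAST n. P n) \<le> degree r" by (rule Least_le)
    then show "degree p \<le> degree r" using p(4) q(4) by simp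
  qed
  have ex: "\<exists>p. poly_over E p \<and> lead_coeff p = 1 \<and> poly p x = 0 \<and>
       (\<forall>q. q \<noteq> 0 \<and> poly_over E q \<and> poly q x = 0 \<longrightarrow> degree p \<le> degree q)"
    using p pmin by blast
  have "poly_over E (min_poly E x) \<and> lead_coeff (min_poly E x) = 1 \<and> poly (min_poly E x) x = 0 \<and>
       (\<forall>q. q \<noteq> 0 \<and> poly_over E q \<and> poly q x = 0 \<longrightarrow> degree (min_poly E x) \<le> degree q)"
    unfolding min_poly_def by (rule someI_ex[OF ex])
  then show "poly_over E (min_poly E x)" "lead_coeff (min_poly E x) = 1" "poly (min_poly E x) x = 0"
    "\<And>q. q \<noteq> 0 \<Longrightarrow> poly_over E q \<Longrightarrow> poly q x = 0 \<Longrightarrow> degree (min_poly E x) \<le> degree q"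
    by auto
qed

lemma mp_nz: assumes "is_subfield E" "alg_over E x" shows "min_poly E x \<noteq> 0"
proof
  assume "min_poly E x = 0"
  then show False using mp_spec(2)[OF assms] by simp
qed

lemma mp_deg: assumes "is_subfield E" "alg_over E x" shows "degree (min_poly E x) \<ge> 1"
proof (rule ccontr)
  assume "\<not> ?thesis"
  then have "degree (min_poly E x) = 0" by simp
  then have "min_poly E x = [:1:]" using mp_spec(2)[OF assms] by (metis degree_0_id)
  then show False using mp_spec(3)[OF assms] by simp
qed

lemma monic_diff_degree:
  fixes p q :: "'a::field poly"
  assumes "lead_coeff p = 1" "lead_coeff q = 1" "degree p = degree q" "p \<noteq> q"
  shows "degree (p - q) < degree p"
proof -
  have "degree (p - q) \<le> degree p" by (rule degree_diff_le) (use assms(3) in auto)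
  moreover have "coeff (p - q) (degree p) = 0" using assms by simp
  moreover have "p - q \<noteq> 0" using assms(4) by simp
  ultimately show ?thesis by (metis le_neq_implies_less leading_coeff_0_iff)
qed

lemma mp_unique:
  assumes E: "is_subfield E" and p: "poly_over E p" "lead_coeff p = 1" "poly p x = 0"
    and pmin: "\<And>q. q \<noteq> 0 \<Longrightarrow> poly_over E q \<Longrightarrow> poly q x = 0 \<Longrightarrow> degree p \<le> degree q"
  shows "min_poly E x = p"
proof (rule ccontr)
  assume ne: "min_poly E x \<noteq> p"
  have a: "alg_over E x" unfolding alg_over_def using p by (intro exI[of _ p]) auto
  note m = mp_spec[OF E a]
  have p0: "p \<noteq> 0" using p by auto
  have dd: "degree (min_poly E x) = degree p" using m(4)[OF p0 p(1,3)] pmin[OF mp_nz[OF E a] m(1,3)] by simp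
  have "degree (min_poly E x - p) < degree (min_poly E x)"
    by (rule monic_diff_degree) (use m p dd ne in auto)
  moreover have "min_poly E x - p \<noteq> 0" using ne by simp
  moreover have "poly_over E (min_poly E x - p)" using m p E by (simp add: po_diff)
  moreover have "poly (min_poly E x - p) x = 0" using m p by simp
  ultimately show False using m(4)[of "min_poly E x - p"] by linarith
qed

lemma mp_dvd:
  assumes E: "is_subfield E" and a: "alg_over E x" and q: "poly_over E q" "poly q x = 0"
  shows "\<exists>s. poly_over E s \<and> q = min_poly E x * s"
proof -
  note m = mp_spec[OF E a]
  define r where "r = q mod min_poly E x"
  have rE: "poly_over E r" unfolding r_def using po_div_mod[OF E m(1) q(1)] by simp
  have qd: "q = (q div min_poly E x) * min_poly E x + r" unfolding r_def by (rule div_mult_mod_eq[symmetric])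
  have "poly r x = 0" using q(2) m(3) qd by (metis add_0 mult_zero_right poly_add poly_mult)
  have "r = 0"
  proof (rule ccontr)
    assume "r \<noteq> 0"
    then have "degree r < degree (min_poly E x)" unfolding r_def using mp_nz[OF E a]
      by (metis degree_mod_less)
    then show False using m(4)[OF \<open>r \<noteq> 0\<close> rE \<open>poly r x = 0\<close>] by simp
  qed
  then show ?thesis using qd po_div_mod[OF E m(1) q(1)] by (intro exI[of _ "q div min_poly E x"]) (simp add: mult.commute)
qed

lemma mp_irred:
  assumes E: "is_subfield E" and a: "alg_over E x" and ab: "poly_over E a" "poly_over E b"
    and eq: "min_poly E x = a * b"
  shows "degree a = 0 \<or> degree b = 0"
proof -
  note m = mp_spec[OF E a]
  have a0: "a \<noteq> 0" and b0: "b \<noteq> 0" using mp_nz[OF E a] eq by auto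
  have dg: "degree (min_poly E x) = degree a + degree b" using eq a0 b0 by (simp add: degree_mult_eq)
  have "poly a x * poly b x = 0" using m(3) eq by simp
  then have "poly a x = 0 \<or> poly b x = 0" by simp
  then show ?thesis
  proof
    assume "poly a x = 0"
    then have "degree (min_poly E x) \<le> degree a" using m(4)[OF a0 ab(1)] by simp
    then show ?thesis using dg by simp
  next
    assume "poly b x = 0"
    then have "degree (min_poly E x) \<le> degree b" using m(4)[OF b0 ab(2)] by simp
    then show ?thesis using dg by simp
  qed
qed

lemma mp_of_root:
  assumes E: "is_subfield E" and a: "alg_over E x" and r: "poly (min_poly E x) y = 0"
  shows "alg_over E y" "min_poly E y = min_poly E x"
proof -
  note m = mp_spec[OF E a]
  show ay: "alg_over E y" unfolding alg_over_def using m r mp_nz[OF E a] by blast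
  note my = mp_spec[OF E ay]
  obtain s where s: "poly_over E s" "min_poly E x = min_poly E y * s" using mp_dvd[OF E ay m(1) r] by blast
  have "degree (min_poly E y) = 0 \<or> degree s = 0" using mp_irred[OF E a my(1) s(1) s(2)] .
  then have "degree s = 0" using mp_deg[OF E ay] by simp
  then obtain c where c: "s = [:c:]" by (metis degree_0_id)
  have "lead_coeff (min_poly E x) = lead_coeff (min_poly E y) * c" using s(2) c by (simp add: lead_coeff_mult)
  then have "c = 1" using m(2) my(2) by simp
  then show "min_poly E y = min_poly E x" using s(2) c by simp
qed

lemma powers_indep:
  assumes E: "is_subfield E" and a: "alg_over E x"
  shows "fam_indep E {..<degree (min_poly E x)} (\<lambda>i. x ^ i)"
  unfolding fam_indep_def
proof (intro conjI allI impI)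
  show "finite {..<degree (min_poly E x)}" by simp
  fix d assume d: "(\<forall>i\<in>{..<degree (min_poly E x)}. d i \<in> E) \<and> (\<Sum>i\<in>{..<degree (min_poly E x)}. d i * x ^ i) = 0"
  define n where "n = degree (min_poly E x)"
  define p where "p = (\<Sum>i<n. monom (d i) i)"
  have pE: "poly_over E p" unfolding p_def using d E by (intro po_sum_monom) (auto simp: n_def)
  have px: "poly p x = 0" unfolding p_def poly_sum_monom using d by (simp add: n_def)
  have "p = 0"
  proof (rule ccontr)
    assume "p \<noteq> 0"
    then have "degree p < n" unfolding p_def by (rule degree_sum_monom_less)
    then show False using mp_spec(4)[OF E a \<open>p \<noteq> 0\<close> pE px] n_def by simp
  qed
  show "\<forall>i\<in>{..<degree (min_poly E x)}. d i = 0"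
  proof
    fix i assume i: "i \<in> {..<degree (min_poly E x)}"
    have "coeff p i = d i" unfolding p_def using i by (simp add: coeff_sum_monom n_def)
    then show "d i = 0" using \<open>p = 0\<close> by simp
  qed
qed

lemma alg_of_finite_ext:
  assumes EP: "finite_ext E P" and x: "x \<in> P" shows "alg_over E x"
proof -
  have E: "is_subfield E" and P: "is_subfield P" using EP finite_extD by auto
  obtain B where B: "is_basis_over E P B" using EP finite_ext_def by blast
  define n where "n = ext_degree E P"
  have "\<not> fam_indep E {..n} (\<lambda>i. x ^ i)"
  proof
    assume fi: "fam_indep E {..n} (\<lambda>i. x ^ i)"
    have "(\<lambda>i. x ^ i) ` {..n} \<subseteq> P" using x P by (auto intro: sf_power)
    then have "card ((\<lambda>i. x ^ i) ` {..n}) \<le> n"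
      using indep_le_degree[OF E B] fam_indep_set(1)[OF E fi] n_def by blast
    then show False using fam_indep_set(2)[OF E fi] by simp
  qed
  then have "\<exists>d. (\<forall>i\<in>{..n}. d i \<in> E) \<and> (\<Sum>i\<in>{..n}. d i * x ^ i) = 0 \<and> \<not> (\<forall>i\<in>{..n}. d i = 0)"
    unfolding fam_indep_def by simp
  then obtain d i where d: "\<forall>i\<in>{..n}. d i \<in> E" "(\<Sum>i\<in>{..n}. d i * x ^ i) = 0" "i \<in> {..n}" "d i \<noteq> 0"
    by blast
  define p where "p = (\<Sum>i\<in>{..n}. monom (d i) i)"
  have "coeff p i = d i" unfolding p_def using d(3) by (simp add: coeff_sum_monom)
  then have "p \<noteq> 0" using d(4) by auto
  moreover have "poly_over E p" unfolding p_def using d E by (intro po_sum_monom) auto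
  moreover have "poly p x = 0" unfolding p_def poly_sum_monom using d by simp
  ultimately show ?thesis unfolding alg_over_def by blast
qed


lemma simple_ext:
  assumes E: "is_subfield E" and a: "alg_over E x"
  shows "gen_field (insert x E) = {poly p x | p. poly_over E p}"
    "is_basis_over E {poly p x | p. poly_over E p} ((\<lambda>i. x ^ i) ` {..<degree (min_poly E x)})"
    "finite_ext E (gen_field (insert x E))"
    "ext_degree E (gen_field (insert x E)) = degree (min_poly E x)"
proof -
  define d where "d = degree (min_poly E x)"
  define V where "V = {poly p x | p. poly_over E p}"
  define PW where "PW = (\<lambda>i. x ^ i) ` {..<d}"
  note m = mp_spec[OF E a]
  have fi: "fam_indep E {..<d} (\<lambda>i. x ^ i)" unfolding d_def by (rule powers_indep[OF E a])
  have inj: "inj_on (\<lambda>i. x ^ i) {..<d}" by (rule fam_indep_inj[OF E fi])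
  have Vmem: "poly p x \<in> V" if "poly_over E p" for p using that unfolding V_def by blast
  have span_eq: "span_over E PW = V"
  proof
    show "span_over E PW \<subseteq> V"
    proof
      fix y assume "y \<in> span_over E PW"
      then obtain c where c: "\<And>v. v \<in> PW \<Longrightarrow> c v \<in> E" "y = (\<Sum>v\<in>PW. c v * v)"
        unfolding span_over_def by blast
      have "y = (\<Sum>i<d. c (x ^ i) * x ^ i)"
        unfolding c(2) PW_def using sum.reindex[OF inj, of "\<lambda>v. c v * v"] by (simp add: o_def)
      also have "\<dots> = poly (\<Sum>i<d. monom (c (x ^ i)) i) x" by (simp add: poly_sum_monom)
      finally show "y \<in> V" using Vmem[OF po_sum_monom[OF E, of "{..<d}" "\<lambda>i. c (x ^ i)"]] c(1)
        unfolding PW_def by auto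
    qed
  next
    show "V \<subseteq> span_over E PW"
    proof
      fix y assume "y \<in> V"
      then obtain p where p: "poly_over E p" "y = poly p x" unfolding V_def by blast
      define r where "r = p mod min_poly E x"
      have rE: "poly_over E r" unfolding r_def using po_div_mod[OF E m(1) p(1)] by simp
      have "p = (p div min_poly E x) * min_poly E x + r" unfolding r_def by (rule div_mult_mod_eq[symmetric])
      then have "poly p x = poly r x" using m(3) by (metis add_0 mult_zero_right poly_add poly_mult)
      also have "\<dots> = (\<Sum>i<d. coeff r i * x ^ i)"
        by (rule poly_as_sum) (use degree_mod_less[OF mp_nz[OF E a], of p] in \<open>simp add: r_def d_def\<close>)
      finally have "y = (\<Sum>i<d. coeff r i * x ^ i)" using p by simp
      then show "y \<in> span_over E PW" unfolding PW_def using fam_span[OF inj, of "\<lambda>i. coeff r i" E] rE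
        by (simp add: po_coeff)
    qed
  qed
  have PWV: "PW \<subseteq> V"
  proof
    fix v assume "v \<in> PW"
    then obtain i where "v = x ^ i" unfolding PW_def by blast
    then have "v = poly (monom 1 i) x" by (simp add: poly_monom)
    then show "v \<in> V" using Vmem[OF po_monom[OF E sf_1[OF E]]] by simp
  qed
  have basis: "is_basis_over E V PW"
    unfolding is_basis_over_def using PWV span_eq fam_indep_set(1)[OF E fi] PW_def by simp
  have deg: "ext_degree E V = d"
    using ext_degree_eq[OF E basis] fam_indep_set(2)[OF E fi] PW_def by simp
  have V0: "0 \<in> V" using Vmem[OF po_zero[OF E]] by simp
  have V1: "1 \<in> V" using Vmem[OF po_one[OF E]] by simp
  have Vadd: "y + z \<in> V" if yz: "y \<in> V" "z \<in> V" for y z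
  proof -
    obtain p q where "poly_over E p" "y = poly p x" "poly_over E q" "z = poly q x" using yz V_def by blast
    then show ?thesis using Vmem[OF po_add[OF E], of p q] by simp
  qed
  have Vdiff: "y - z \<in> V" if yz: "y \<in> V" "z \<in> V" for y z
  proof -
    obtain p q where "poly_over E p" "y = poly p x" "poly_over E q" "z = poly q x" using yz V_def by blast
    then show ?thesis using Vmem[OF po_diff[OF E], of p q] by simp
  qed
  have Vmult: "y * z \<in> V" if yz: "y \<in> V" "z \<in> V" for y z
  proof -
    obtain p q where "poly_over E p" "y = poly p x" "poly_over E q" "z = poly q x" using yz V_def by blast
    then show ?thesis using Vmem[OF po_mult[OF E], of p q] by simp
  qed
  have Vinv: "inverse y \<in> V" if y: "y \<in> V" for y
  proof (cases "y = 0")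
    case True then show ?thesis using V0 by simp
  next
    case False
    have fy: "fam_indep E {..<d} (\<lambda>i. y * x ^ i)"
      unfolding fam_indep_def
    proof (intro conjI allI impI)
      show "finite {..<d}" by simp
      fix c assume c: "(\<forall>i\<in>{..<d}. c i \<in> E) \<and> (\<Sum>i\<in>{..<d}. c i * (y * x ^ i)) = 0"
      have "(\<Sum>i\<in>{..<d}. c i * (y * x ^ i)) = y * (\<Sum>i\<in>{..<d}. c i * x ^ i)"
        by (simp add: sum_distrib_left mult_ac)
      then have "(\<Sum>i\<in>{..<d}. c i * x ^ i) = 0" using c False by simp
      then show "\<forall>i\<in>{..<d}. c i = 0" using fam_indepD[OF fi, of c] c by simp
    qed
    define Y where "Y = (\<lambda>i. y * x ^ i) ` {..<d}"
    have YV: "Y \<subseteq> V" unfolding Y_def using Vmult[OF y] PWV PW_def by auto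
    have Yi: "lin_indep_over E Y" using fam_indep_set(1)[OF E fy] unfolding Y_def .
    have Yc: "card Y = ext_degree E V" using fam_indep_set(2)[OF E fy] deg unfolding Y_def by simp
    have Yb: "is_basis_over E V Y" by (rule indep_full_basis[OF E basis YV Yi Yc])
    have "1 \<in> span_over E Y" using Yb V1 unfolding is_basis_over_def by simp
    then obtain c where c: "\<And>v. v \<in> Y \<Longrightarrow> c v \<in> E" "1 = (\<Sum>v\<in>Y. c v * v)"
      unfolding span_over_def by blast
    have injY: "inj_on (\<lambda>i. y * x ^ i) {..<d}" by (rule fam_indep_inj[OF E fy])
    have "1 = (\<Sum>i<d. c (y * x ^ i) * (y * x ^ i))"
      unfolding c(2) Y_def using sum.reindex[OF injY, of "\<lambda>v. c v * v"] by (simp add: o_def)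
    also have "\<dots> = y * (\<Sum>i<d. c (y * x ^ i) * x ^ i)" by (simp add: sum_distrib_left mult_ac)
    finally have one: "1 = y * (\<Sum>i<d. c (y * x ^ i) * x ^ i)" .
    have "(\<Sum>i<d. c (y * x ^ i) * x ^ i) \<in> span_over E PW"
      unfolding PW_def by (rule fam_span[OF inj]) (use c(1) in \<open>auto simp: Y_def\<close>)
    then have zV: "(\<Sum>i<d. c (y * x ^ i) * x ^ i) \<in> V" using span_eq by simp
    have "inverse y = (\<Sum>i<d. c (y * x ^ i) * x ^ i)" using one by (intro inverse_unique) simp
    then show ?thesis using zV by simp
  qed
  have Vsf: "is_subfield V" unfolding is_subfield_def using V0 V1 Vadd Vdiff Vmult Vinv by simp
  have EV: "E \<subseteq> V"
  proof
    fix e assume "e \<in> E" then show "e \<in> V" using Vmem[OF po_const[OF E], of e] by simp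
  qed
  have xV: "x \<in> V" using Vmem[OF po_monom[OF E sf_1[OF E], of 1]] by (simp add: poly_monom)
  have "gen_field (insert x E) \<subseteq> V" using gen_field_min[OF Vsf] EV xV by blast
  moreover have "V \<subseteq> gen_field (insert x E)"
  proof
    fix y assume "y \<in> V"
    then obtain p where p: "poly_over E p" "y = poly p x" unfolding V_def by blast
    have "E \<subseteq> gen_field (insert x E)" "x \<in> gen_field (insert x E)" using gen_field_sup[of "insert x E"] by auto
    then show "y \<in> gen_field (insert x E)" using p poly_in_sf[OF gen_field_sf po_mono[OF p(1)]] by auto
  qed
  ultimately have gV: "gen_field (insert x E) = V" by blast
  show "gen_field (insert x E) = {poly p x | p. poly_over E p}" using gV V_def by simp
  show "is_basis_over E {poly p x | p. poly_over E p} ((\<lambda>i. x ^ i) ` {..<degree (min_poly E x)})"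
    using basis V_def PW_def d_def by simp
  show "finite_ext E (gen_field (insert x E))" unfolding finite_ext_def gV using E Vsf EV basis by (intro conjI exI) auto
  show "ext_degree E (gen_field (insert x E)) = degree (min_poly E x)" using gV deg d_def by simp
qed


section \<open>Homomorphisms\<close>

definition hom_on :: "'a::field set \<Rightarrow> ('a \<Rightarrow> 'a) \<Rightarrow> bool" where
  "hom_on P \<sigma> \<longleftrightarrow> \<sigma> 1 = 1 \<and> (\<forall>x\<in>P. \<forall>y\<in>P. \<sigma> (x + y) = \<sigma> x + \<sigma> y \<and> \<sigma> (x * y) = \<sigma> x * \<sigma> y)"

lemma is_embedding_hom: "is_embedding E P \<sigma> \<longleftrightarrow> hom_on P \<sigma> \<and> (\<forall>x\<in>E. \<sigma> x = x)"
  unfolding is_embedding_def hom_on_def by auto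

context
  fixes P :: "'a::field set" and \<sigma> :: "'a \<Rightarrow> 'a"
  assumes P: "is_subfield P" and h: "hom_on P \<sigma>"
begin

lemma hom_add: "x \<in> P \<Longrightarrow> y \<in> P \<Longrightarrow> \<sigma> (x + y) = \<sigma> x + \<sigma> y" using h hom_on_def by blast
lemma hom_mult: "x \<in> P \<Longrightarrow> y \<in> P \<Longrightarrow> \<sigma> (x * y) = \<sigma> x * \<sigma> y" using h hom_on_def by blast
lemma hom_one: "\<sigma> 1 = 1" using h hom_on_def by blast
lemma hom_zero: "\<sigma> 0 = 0"
proof -
  have "\<sigma> 0 + \<sigma> 0 = \<sigma> 0 + 0" using hom_add[OF sf_0[OF P] sf_0[OF P]] by simp
  then show ?thesis by (rule add_left_imp_eq)
qed
lemma hom_uminus: "x \<in> P \<Longrightarrow> \<sigma> (- x) = - \<sigma> x"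
proof -
  assume x: "x \<in> P"
  have "\<sigma> x + \<sigma> (- x) = 0" using hom_add[OF x sf_uminus[OF P x]] hom_zero by simp
  then show ?thesis by (metis minus_unique)
qed
lemma hom_diff: "x \<in> P \<Longrightarrow> y \<in> P \<Longrightarrow> \<sigma> (x - y) = \<sigma> x - \<sigma> y"
  using hom_add[of x "- y"] hom_uminus[of y] sf_uminus[OF P] by simp
lemma hom_inverse: "x \<in> P \<Longrightarrow> \<sigma> (inverse x) = inverse (\<sigma> x)"
proof (cases "x = 0")
  case True then show ?thesis using hom_zero by simp
next
  case False
  assume x: "x \<in> P"
  have "\<sigma> x * \<sigma> (inverse x) = 1" using hom_mult[OF x sf_inverse[OF P x]] False hom_one by simp
  then show ?thesis by (metis inverse_unique)
qed
lemma hom_power: "x \<in> P \<Longrightarrow> \<sigma> (x ^ n) = \<sigma> x ^ n"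
  by (induction n) (auto simp: hom_one hom_mult sf_power[OF P])
lemma hom_sum: "(\<And>i. i \<in> A \<Longrightarrow> f i \<in> P) \<Longrightarrow> \<sigma> (sum f A) = (\<Sum>i\<in>A. \<sigma> (f i))"
  by (induction A rule: infinite_finite_induct) (auto simp: hom_zero hom_add sf_sum[OF P])
lemma hom_prod: "(\<And>i. i \<in> A \<Longrightarrow> f i \<in> P) \<Longrightarrow> \<sigma> (prod f A) = (\<Prod>i\<in>A. \<sigma> (f i))"
  by (induction A rule: infinite_finite_induct) (auto simp: hom_one hom_mult sf_prod[OF P])
lemma hom_inj: "inj_on \<sigma> P"
proof (rule inj_onI)
  fix x y assume xy: "x \<in> P" "y \<in> P" "\<sigma> x = \<sigma> y"
  then have d: "\<sigma> (x - y) = 0" using hom_diff by simp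
  show "x = y"
  proof (rule ccontr)
    assume "x \<noteq> y"
    then have "\<sigma> ((x - y) * inverse (x - y)) = 1" using hom_one by simp
    then have "\<sigma> (x - y) * \<sigma> (inverse (x - y)) = 1"
      using hom_mult sf_diff[OF P xy(1,2)] sf_inverse[OF P] by metis
    then show False using d by simp
  qed
qed

lemma hom_image_sf: "is_subfield (\<sigma> ` P)"
  unfolding is_subfield_def
proof (intro conjI ballI)
  show "0 \<in> \<sigma> ` P" using hom_zero sf_0[OF P] by (metis image_eqI)
  show "1 \<in> \<sigma> ` P" using hom_one sf_1[OF P] by (metis image_eqI)
  fix x y assume "x \<in> \<sigma> ` P" "y \<in> \<sigma> ` P"
  then obtain a b where ab: "a \<in> P" "b \<in> P" "x = \<sigma> a" "y = \<sigma> b" by blast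
  show "x + y \<in> \<sigma> ` P" using ab hom_add sf_add[OF P] by (metis image_eqI)
  show "x - y \<in> \<sigma> ` P" using ab hom_diff sf_diff[OF P] by (metis image_eqI)
  show "x * y \<in> \<sigma> ` P" using ab hom_mult sf_mult[OF P] by (metis image_eqI)
next
  fix x assume "x \<in> \<sigma> ` P"
  then obtain a where a: "a \<in> P" "x = \<sigma> a" by blast
  show "inverse x \<in> \<sigma> ` P" using a hom_inverse sf_inverse[OF P] by (metis image_eqI)
qed

lemma coeff_map_hom: "coeff (map_poly \<sigma> p) n = \<sigma> (coeff p n)"
  by (rule coeff_map_poly) (rule hom_zero)

lemma map_hom_add: "poly_over P p \<Longrightarrow> poly_over P q \<Longrightarrow> map_poly \<sigma> (p + q) = map_poly \<sigma> p + map_poly \<sigma> q"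
  by (rule poly_eqI) (simp add: coeff_map_hom hom_add po_coeff)
lemma map_hom_diff: "poly_over P p \<Longrightarrow> poly_over P q \<Longrightarrow> map_poly \<sigma> (p - q) = map_poly \<sigma> p - map_poly \<sigma> q"
  by (rule poly_eqI) (simp add: coeff_map_hom hom_diff po_coeff)
lemma map_hom_mult: "poly_over P p \<Longrightarrow> poly_over P q \<Longrightarrow> map_poly \<sigma> (p * q) = map_poly \<sigma> p * map_poly \<sigma> q"
proof (rule poly_eqI)
  fix n assume p: "poly_over P p" and q: "poly_over P q"
  have "coeff (map_poly \<sigma> (p * q)) n = \<sigma> (\<Sum>i\<le>n. coeff p i * coeff q (n - i))"
    by (simp add: coeff_map_hom coeff_mult)
  also have "\<dots> = (\<Sum>i\<le>n. \<sigma> (coeff p i) * \<sigma> (coeff q (n - i)))"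
    using p q by (simp add: hom_sum hom_mult po_coeff sf_mult[OF P])
  also have "\<dots> = coeff (map_poly \<sigma> p * map_poly \<sigma> q) n" by (simp add: coeff_mult coeff_map_hom)
  finally show "coeff (map_poly \<sigma> (p * q)) n = coeff (map_poly \<sigma> p * map_poly \<sigma> q) n" .
qed
lemma map_hom_const: "map_poly \<sigma> [:c:] = [:\<sigma> c:]"
  by (rule poly_eqI) (simp add: coeff_map_hom coeff_pCons hom_zero split: nat.splits)
lemma map_hom_X: "map_poly \<sigma> [:0, 1:] = [:0, 1:]"
  by (rule poly_eqI) (simp add: coeff_map_hom coeff_pCons hom_zero hom_one split: nat.splits)
lemma map_hom_eval: "poly_over P p \<Longrightarrow> x \<in> P \<Longrightarrow> \<sigma> (poly p x) = poly (map_poly \<sigma> p) (\<sigma> x)"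
proof -
  assume p: "poly_over P p" and x: "x \<in> P"
  have "\<sigma> (poly p x) = \<sigma> (\<Sum>i\<le>degree p. coeff p i * x ^ i)" by (simp add: poly_altdef)
  also have "\<dots> = (\<Sum>i\<le>degree p. \<sigma> (coeff p i) * \<sigma> x ^ i)"
    using p x by (simp add: hom_sum hom_mult hom_power po_coeff sf_mult[OF P] sf_power[OF P])
  also have "\<dots> = (\<Sum>i\<le>degree p. coeff (map_poly \<sigma> p) i * \<sigma> x ^ i)" by (simp add: coeff_map_hom)
  also have "\<dots> = (\<Sum>i<Suc (degree p). coeff (map_poly \<sigma> p) i * \<sigma> x ^ i)"
    by (simp only: lessThan_Suc_atMost)
  also have "\<dots> = poly (map_poly \<sigma> p) (\<sigma> x)"
  proof (rule poly_as_sum[symmetric])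
    have "degree (map_poly \<sigma> p) \<le> degree p"
      by (rule degree_le) (auto simp: coeff_map_hom coeff_eq_0 hom_zero)
    then show "map_poly \<sigma> p = 0 \<or> degree (map_poly \<sigma> p) < Suc (degree p)" by simp
  qed
  finally show ?thesis .
qed
lemma po_map_hom: "poly_over P p \<Longrightarrow> poly_over (\<sigma> ` P) (map_poly \<sigma> p)"
  unfolding poly_over_def by (simp add: coeff_map_hom)

end

lemma map_poly_fix: "is_subfield E \<Longrightarrow> poly_over E p \<Longrightarrow> (\<forall>x\<in>E. \<sigma> x = x) \<Longrightarrow> map_poly \<sigma> p = p"
proof -
  assume E: "is_subfield E" and p: "poly_over E p" and f: "\<forall>x\<in>E. \<sigma> x = x"
  have z: "\<sigma> 0 = 0" using f sf_0[OF E] by blast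
  show ?thesis by (rule poly_eqI) (simp add: coeff_map_poly[of \<sigma>, OF z] f po_coeff[OF p])
qed

lemma hom_on_mono: "hom_on P \<sigma> \<Longrightarrow> Q \<subseteq> P \<Longrightarrow> hom_on Q \<sigma>"
  unfolding hom_on_def by blast

lemma hom_on_id: "hom_on P (\<lambda>x. x)" unfolding hom_on_def by simp

section \<open>Extension of embeddings\<close>

lemma extend_emb:
  assumes E: "is_subfield E" and a: "alg_over E x" and h: "hom_on E \<sigma>"
    and b: "poly (map_poly \<sigma> (min_poly E x)) \<beta> = 0"
  defines "G \<equiv> gen_field (insert x E)"
  shows "\<exists>\<tau>. hom_on G \<tau> \<and> (\<forall>e\<in>E. \<tau> e = \<sigma> e) \<and> \<tau> x = \<beta> \<and> (\<forall>y. y \<notin> G \<longrightarrow> \<tau> y = y) \<and>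
            (\<forall>p. poly_over E p \<longrightarrow> \<tau> (poly p x) = poly (map_poly \<sigma> p) \<beta>)"
proof -
  note m = mp_spec[OF E a]
  have G: "G = {poly p x | p. poly_over E p}" unfolding G_def by (rule simple_ext(1)[OF E a])
  define \<tau> where "\<tau> = (\<lambda>y. if y \<in> G then poly (map_poly \<sigma> (SOME p. poly_over E p \<and> y = poly p x)) \<beta> else y)"
  have wd: "poly (map_poly \<sigma> p) \<beta> = poly (map_poly \<sigma> q) \<beta>"
    if pq: "poly_over E p" "poly_over E q" "poly p x = poly q x" for p q
  proof -
    obtain s where s: "poly_over E s" "p - q = min_poly E x * s"
      using mp_dvd[OF E a po_diff[OF E pq(1,2)]] pq(3) by auto
    have "map_poly \<sigma> p - map_poly \<sigma> q = map_poly \<sigma> (p - q)" using map_hom_diff[OF E h pq(1,2)] by simp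
    also have "\<dots> = map_poly \<sigma> (min_poly E x) * map_poly \<sigma> s" using s map_hom_mult[OF E h m(1) s(1)] by simp
    finally have "poly (map_poly \<sigma> p - map_poly \<sigma> q) \<beta> = 0" using b by simp
    then show ?thesis by simp
  qed
  have tp: "\<tau> (poly p x) = poly (map_poly \<sigma> p) \<beta>" if p: "poly_over E p" for p
  proof -
    have ex: "\<exists>q. poly_over E q \<and> poly p x = poly q x" using p by blast
    define q where "q = (SOME q. poly_over E q \<and> poly p x = poly q x)"
    have q: "poly_over E q \<and> poly p x = poly q x" unfolding q_def by (rule someI_ex[OF ex])
    have "poly p x \<in> G" using G p by blast
    then have "\<tau> (poly p x) = poly (map_poly \<sigma> q) \<beta>" unfolding \<tau>_def q_def by simp
    also have "\<dots> = poly (map_poly \<sigma> p) \<beta>" using wd[OF _ p] q by simp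
    finally show ?thesis .
  qed
  have hom: "hom_on G \<tau>"
    unfolding hom_on_def
  proof (intro conjI ballI)
    have "\<tau> (poly 1 x) = poly (map_poly \<sigma> 1) \<beta>" using tp[OF po_one[OF E]] .
    then show "\<tau> 1 = 1" using map_hom_const[OF E h, of 1] hom_one[OF E h] by (simp add: one_pCons)
    fix y z assume "y \<in> G" "z \<in> G"
    then obtain p q where pq: "poly_over E p" "y = poly p x" "poly_over E q" "z = poly q x"
      using G by blast
    show "\<tau> (y + z) = \<tau> y + \<tau> z"
      using tp[OF po_add[OF E pq(1,3)]] tp[OF pq(1)] tp[OF pq(3)] map_hom_add[OF E h pq(1,3)] pq by simp
    show "\<tau> (y * z) = \<tau> y * \<tau> z"
      using tp[OF po_mult[OF E pq(1,3)]] tp[OF pq(1)] tp[OF pq(3)] map_hom_mult[OF E h pq(1,3)] pq by simp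
  qed
  have te: "\<tau> e = \<sigma> e" if e: "e \<in> E" for e
    using tp[OF po_const[OF E e]] map_hom_const[OF E h, of e] by simp
  have tx: "\<tau> x = \<beta>"
  proof -
    have "poly_over E [:0, 1:]" using E by (simp add: po_pCons po_const sf_0 sf_1)
    then have "\<tau> (poly [:0, 1:] x) = poly (map_poly \<sigma> [:0, 1:]) \<beta>" by (rule tp)
    then show ?thesis using map_hom_X[OF E h] by simp
  qed
  have tout: "\<forall>y. y \<notin> G \<longrightarrow> \<tau> y = y" unfolding \<tau>_def by simp
  show ?thesis using hom te tx tout tp by blast
qed


section \<open>Automorphisms\<close>

lemma AutD:
  assumes "\<sigma> \<in> Aut E P"
  shows "hom_on P \<sigma>" "\<And>x. x \<in> E \<Longrightarrow> \<sigma> x = x" "\<sigma> ` P = P" "\<And>y. y \<notin> P \<Longrightarrow> \<sigma> y = y"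
  using assms unfolding Aut_def is_embedding_hom by auto

lemma AutI:
  "hom_on P \<sigma> \<Longrightarrow> (\<And>x. x \<in> E \<Longrightarrow> \<sigma> x = x) \<Longrightarrow> \<sigma> ` P = P \<Longrightarrow> (\<And>y. y \<notin> P \<Longrightarrow> \<sigma> y = y) \<Longrightarrow> \<sigma> \<in> Aut E P"
  unfolding Aut_def is_embedding_hom by auto

lemma Aut_id: "(\<lambda>x. x) \<in> Aut E P"
  by (rule AutI) (auto simp: hom_on_id)

lemma Aut_mem: "\<sigma> \<in> Aut E P \<Longrightarrow> y \<in> P \<Longrightarrow> \<sigma> y \<in> P"
  using AutD(3) by blast

lemma Aut_comp:
  assumes P: "is_subfield P" and s: "\<sigma> \<in> Aut E P" and t: "\<tau> \<in> Aut E P"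
  shows "\<sigma> \<circ> \<tau> \<in> Aut E P"
proof (rule AutI)
  show "hom_on P (\<sigma> \<circ> \<tau>)" unfolding hom_on_def
    using hom_add[OF P AutD(1)[OF s]] hom_mult[OF P AutD(1)[OF s]] hom_add[OF P AutD(1)[OF t]]
      hom_mult[OF P AutD(1)[OF t]] hom_one[OF P AutD(1)[OF s]] hom_one[OF P AutD(1)[OF t]]
      Aut_mem[OF t] by simp
  show "\<And>x. x \<in> E \<Longrightarrow> (\<sigma> \<circ> \<tau>) x = x" using AutD(2)[OF s] AutD(2)[OF t] by simp
  show "(\<sigma> \<circ> \<tau>) ` P = P" using AutD(3)[OF s] AutD(3)[OF t] by (metis image_comp)
  show "\<And>y. y \<notin> P \<Longrightarrow> (\<sigma> \<circ> \<tau>) y = y" using AutD(4)[OF s] AutD(4)[OF t] by simp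
qed

lemma Aut_comp_inj:
  assumes P: "is_subfield P" and s: "\<sigma> \<in> Aut E P"
  shows "inj_on (\<lambda>\<tau>. \<sigma> \<circ> \<tau>) (Aut E P)"
proof (rule inj_onI)
  fix t1 t2 assume t: "t1 \<in> Aut E P" "t2 \<in> Aut E P" "\<sigma> \<circ> t1 = \<sigma> \<circ> t2"
  show "t1 = t2"
  proof
    fix y show "t1 y = t2 y"
    proof (cases "y \<in> P")
      case True
      have "\<sigma> (t1 y) = \<sigma> (t2 y)" using t(3) by (metis comp_apply)
      then show ?thesis using inj_onD[OF hom_inj[OF P AutD(1)[OF s]]] Aut_mem[OF t(1) True] Aut_mem[OF t(2) True]
        by blast
    next
      case False then show ?thesis using AutD(4)[OF t(1)] AutD(4)[OF t(2)] by simp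
    qed
  qed
qed

lemma Aut_eval:
  assumes P: "is_subfield P" and s: "\<sigma> \<in> Aut E P" and E: "is_subfield E" "E \<subseteq> P"
    and p: "poly_over E p" and x: "x \<in> P"
  shows "\<sigma> (poly p x) = poly p (\<sigma> x)"
proof -
  have "\<sigma> (poly p x) = poly (map_poly \<sigma> p) (\<sigma> x)"
    using map_hom_eval[OF P AutD(1)[OF s] po_mono[OF p E(2)] x] .
  also have "map_poly \<sigma> p = p" using map_poly_fix[OF E(1) p] AutD(2)[OF s] by blast
  finally show ?thesis .
qed

locale simple_setup =
  fixes E P :: "'a::field set" and \<theta> :: 'a
  assumes E: "is_subfield E" and alg: "alg_over E \<theta>" and Pdef: "P = gen_field (insert \<theta> E)"
begin

lemma P_sf: "is_subfield P" using Pdef gen_field_sf by simp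
lemma EP: "E \<subseteq> P" using Pdef gen_field_sup by blast
lemma thP: "\<theta> \<in> P" using Pdef gen_field_sup by blast
lemma P_eq: "P = {poly p \<theta> | p. poly_over E p}" using simple_ext(1)[OF E alg] Pdef by simp
lemma P_fe: "finite_ext E P" using simple_ext(3)[OF E alg] Pdef by simp
lemma P_deg: "ext_degree E P = degree (min_poly E \<theta>)" using simple_ext(4)[OF E alg] Pdef by simp

lemma aut_root: "\<sigma> \<in> Aut E P \<Longrightarrow> poly (min_poly E \<theta>) (\<sigma> \<theta>) = 0"
  using Aut_eval[OF P_sf _ E EP mp_spec(1)[OF E alg] thP] mp_spec(3)[OF E alg]
    hom_zero[OF P_sf AutD(1)] by metis

lemma aut_determined:
  assumes s: "\<sigma> \<in> Aut E P" and t: "\<tau> \<in> Aut E P" and eq: "\<sigma> \<theta> = \<tau> \<theta>"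
  shows "\<sigma> = \<tau>"
proof
  fix y show "\<sigma> y = \<tau> y"
  proof (cases "y \<in> P")
    case True
    then obtain p where p: "poly_over E p" "y = poly p \<theta>" using P_eq by blast
    show ?thesis using Aut_eval[OF P_sf s E EP p(1) thP] Aut_eval[OF P_sf t E EP p(1) thP] eq p(2) by simp
  next
    case False then show ?thesis using AutD(4)[OF s] AutD(4)[OF t] by simp
  qed
qed

lemma aut_inj: "inj_on (\<lambda>\<sigma>. \<sigma> \<theta>) (Aut E P)"
  using aut_determined by (meson inj_onI)

lemma aut_finite: "finite (Aut E P)" and aut_card_le: "card (Aut E P) \<le> ext_degree E P"
proof -
  have sub: "(\<lambda>\<sigma>. \<sigma> \<theta>) ` Aut E P \<subseteq> {y. poly (min_poly E \<theta>) y = 0}" using aut_root by blast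
  have fin: "finite {y. poly (min_poly E \<theta>) y = 0}" using poly_roots_finite[OF mp_nz[OF E alg]] .
  show "finite (Aut E P)" using finite_imageD[OF finite_subset[OF sub fin] aut_inj] .
  have "card (Aut E P) = card ((\<lambda>\<sigma>. \<sigma> \<theta>) ` Aut E P)" using card_image[OF aut_inj] by simp
  also have "\<dots> \<le> card {y. poly (min_poly E \<theta>) y = 0}" using card_mono[OF fin sub] .
  also have "\<dots> \<le> degree (min_poly E \<theta>)" using card_poly_roots_bound[OF mp_nz[OF E alg]] .
  finally show "card (Aut E P) \<le> ext_degree E P" using P_deg by simp
qed

lemma root_gen:
  assumes b: "\<beta> \<in> P" "poly (min_poly E \<theta>) \<beta> = 0"
  shows "gen_field (insert \<beta> E) = P"
proof -
  have ab: "alg_over E \<beta>" and mb: "min_poly E \<beta> = min_poly E \<theta>" using mp_of_root[OF E alg b(2)] by auto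
  define Q where "Q = gen_field (insert \<beta> E)"
  have QP: "Q \<subseteq> P" unfolding Q_def using gen_field_min[OF P_sf] EP b(1) by blast
  have "ext_degree E Q = ext_degree E P" unfolding Q_def using simple_ext(4)[OF E ab] mb P_deg by simp
  moreover have "is_subfield Q" "E \<subseteq> Q" unfolding Q_def using gen_field_sf gen_field_sup[of "insert \<beta> E"] by auto
  ultimately have "Q = P" using same_degree_eq[OF P_fe _ _ QP] by blast
  then show ?thesis unfolding Q_def .
qed

lemma aut_of_root:
  assumes b: "\<beta> \<in> P" "poly (min_poly E \<theta>) \<beta> = 0"
  shows "\<exists>\<sigma>\<in>Aut E P. \<sigma> \<theta> = \<beta>"
proof -
  have b': "poly (map_poly (\<lambda>x. x) (min_poly E \<theta>)) \<beta> = 0" using b by simp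
  obtain \<tau> where t: "hom_on P \<tau>" "\<forall>e\<in>E. \<tau> e = e" "\<tau> \<theta> = \<beta>" "\<forall>y. y \<notin> P \<longrightarrow> \<tau> y = y"
    "\<forall>p. poly_over E p \<longrightarrow> \<tau> (poly p \<theta>) = poly p \<beta>"
    using extend_emb[OF E alg hom_on_id b'] Pdef by auto
  have ab: "alg_over E \<beta>" and mb: "min_poly E \<beta> = min_poly E \<theta>" using mp_of_root[OF E alg b(2)] by auto
  define Q where "Q = gen_field (insert \<beta> E)"
  have Q: "Q = {poly p \<beta> | p. poly_over E p}" unfolding Q_def using simple_ext(1)[OF E ab] .
  have img: "\<tau> ` P = Q"
  proof
    show "\<tau> ` P \<subseteq> Q" using P_eq Q t(5) by auto
    show "Q \<subseteq> \<tau> ` P"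
    proof
      fix y assume "y \<in> Q"
      then obtain p where p: "poly_over E p" "y = poly p \<beta>" using Q by blast
      then have "y = \<tau> (poly p \<theta>)" using t(5) by simp
      moreover have "poly p \<theta> \<in> P" using P_eq p by blast
      ultimately show "y \<in> \<tau> ` P" by blast
    qed
  qed
  have QP: "Q \<subseteq> P" unfolding Q_def using gen_field_min[OF P_sf] EP b(1) by blast
  have "ext_degree E Q = ext_degree E P" unfolding Q_def using simple_ext(4)[OF E ab] mb P_deg by simp
  moreover have "is_subfield Q" "E \<subseteq> Q" unfolding Q_def using gen_field_sf gen_field_sup[of "insert \<beta> E"] by auto
  ultimately have "Q = P" using same_degree_eq[OF P_fe _ _ QP] by blast
  then have "\<tau> \<in> Aut E P" using t img by (intro AutI) auto
  then show ?thesis using t(3) by blast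
qed

lemma aut_roots_bij: "bij_betw (\<lambda>\<sigma>. \<sigma> \<theta>) (Aut E P) {\<beta>\<in>P. poly (min_poly E \<theta>) \<beta> = 0}"
  unfolding bij_betw_def
proof
  show "inj_on (\<lambda>\<sigma>. \<sigma> \<theta>) (Aut E P)" by (rule aut_inj)
  show "(\<lambda>\<sigma>. \<sigma> \<theta>) ` Aut E P = {\<beta> \<in> P. poly (min_poly E \<theta>) \<beta> = 0}"
  proof
    show "(\<lambda>\<sigma>. \<sigma> \<theta>) ` Aut E P \<subseteq> {\<beta> \<in> P. poly (min_poly E \<theta>) \<beta> = 0}"
      using aut_root Aut_mem thP by blast
    show "{\<beta> \<in> P. poly (min_poly E \<theta>) \<beta> = 0} \<subseteq> (\<lambda>\<sigma>. \<sigma> \<theta>) ` Aut E P"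
      using aut_of_root by blast
  qed
qed

lemma card_roots_aut: "card {\<beta>\<in>P. poly (min_poly E \<theta>) \<beta> = 0} = card (Aut E P)"
  using bij_betw_same_card[OF aut_roots_bij] by simp

end


lemma ext_degree_self: assumes P: "is_subfield P" shows "ext_degree P P = 1"
proof -
  have "is_basis_over P P {1}"
    unfolding is_basis_over_def lin_indep_over_def span_over_def using P by (auto simp: sf_1)
  then show ?thesis using ext_degree_eq[OF P] by simp
qed

lemma finite_ext_self: "is_subfield P \<Longrightarrow> finite_ext P P"
proof -
  assume P: "is_subfield P"
  have "is_basis_over P P {1}"
    unfolding is_basis_over_def lin_indep_over_def span_over_def using P by (auto simp: sf_1)
  then show ?thesis unfolding finite_ext_def using P by blast
qed

lemma map_linear:
  assumes P: "is_subfield P" and h: "hom_on P \<tau>" and a: "a \<in> P"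
  shows "map_poly \<tau> [:- a, 1:] = [:- \<tau> a, 1:]"
  using hom_zero[OF P h] hom_one[OF P h] hom_uminus[OF P h a] by (simp add: map_poly_pCons)

lemma po_linear: "is_subfield P \<Longrightarrow> a \<in> P \<Longrightarrow> poly_over P [:- a, 1:]"
  by (simp add: po_pCons po_const sf_uminus sf_1 sf_0)

lemma map_hom_prod:
  assumes P: "is_subfield P" and h: "hom_on P \<tau>" and f: "\<And>i. i \<in> A \<Longrightarrow> poly_over P (f i)"
  shows "map_poly \<tau> (\<Prod>i\<in>A. f i) = (\<Prod>i\<in>A. map_poly \<tau> (f i))"
  using f
proof (induction A rule: infinite_finite_induct)
  case (infinite A) then show ?case using map_hom_const[OF P h, of 1] hom_one[OF P h] by (simp add: one_pCons)
next
  case empty then show ?case using map_hom_const[OF P h, of 1] hom_one[OF P h] by (simp add: one_pCons)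
next
  case (insert x F)
  have "map_poly \<tau> (\<Prod>i\<in>insert x F. f i) = map_poly \<tau> (f x * (\<Prod>i\<in>F. f i))" using insert by simp
  also have "\<dots> = map_poly \<tau> (f x) * map_poly \<tau> (\<Prod>i\<in>F. f i)"
    by (rule map_hom_mult[OF P h]) (auto intro!: po_prod[OF P] insert.prems)
  finally show ?case using insert by simp
qed

context simple_setup
begin

definition Fx :: "'a set" where "Fx = {x\<in>P. \<forall>\<sigma>\<in>Aut E P. \<sigma> x = x}"

lemma Fx_sf: "is_subfield Fx"
proof -
  have h: "\<And>\<sigma>. \<sigma> \<in> Aut E P \<Longrightarrow> hom_on P \<sigma>" using AutD(1) by blast
  have c0: "0 \<in> Fx" unfolding Fx_def using hom_zero[OF P_sf h] sf_0[OF P_sf] by blast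
  have c1: "1 \<in> Fx" unfolding Fx_def using hom_one[OF P_sf h] sf_1[OF P_sf] by blast
  have c2: "x + y \<in> Fx \<and> x - y \<in> Fx \<and> x * y \<in> Fx" if x: "x \<in> Fx" and y: "y \<in> Fx" for x y
  proof -
    have xP: "x \<in> P" and yP: "y \<in> P" using x y Fx_def by auto
    have fx: "\<And>\<sigma>. \<sigma> \<in> Aut E P \<Longrightarrow> \<sigma> x = x" and fy: "\<And>\<sigma>. \<sigma> \<in> Aut E P \<Longrightarrow> \<sigma> y = y"
      using x y Fx_def by auto
    have "\<And>\<sigma>. \<sigma> \<in> Aut E P \<Longrightarrow> \<sigma> (x + y) = x + y \<and> \<sigma> (x - y) = x - y \<and> \<sigma> (x * y) = x * y"
    proof -
      fix \<sigma> assume s: "\<sigma> \<in> Aut E P"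
      show "\<sigma> (x + y) = x + y \<and> \<sigma> (x - y) = x - y \<and> \<sigma> (x * y) = x * y"
        using hom_add[OF P_sf h[OF s] xP yP] hom_diff[OF P_sf h[OF s] xP yP] hom_mult[OF P_sf h[OF s] xP yP]
          fx[OF s] fy[OF s] by simp
    qed
    then show ?thesis unfolding Fx_def using sf_add[OF P_sf xP yP] sf_diff[OF P_sf xP yP] sf_mult[OF P_sf xP yP]
      by blast
  qed
  have c3: "inverse x \<in> Fx" if x: "x \<in> Fx" for x
  proof -
    have xP: "x \<in> P" using x Fx_def by auto
    have fx: "\<And>\<sigma>. \<sigma> \<in> Aut E P \<Longrightarrow> \<sigma> x = x" using x Fx_def by auto
    have "\<And>\<sigma>. \<sigma> \<in> Aut E P \<Longrightarrow> \<sigma> (inverse x) = inverse x"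
    proof -
      fix \<sigma> assume s: "\<sigma> \<in> Aut E P"
      show "\<sigma> (inverse x) = inverse x" using hom_inverse[OF P_sf h[OF s] xP] fx[OF s] by simp
    qed
    then show ?thesis unfolding Fx_def using sf_inverse[OF P_sf xP] by blast
  qed
  show ?thesis unfolding is_subfield_def using c0 c1 c2 c3 by blast
qed

lemma E_Fx: "E \<subseteq> Fx" unfolding Fx_def using EP AutD(2) by blast
lemma Fx_P: "Fx \<subseteq> P" unfolding Fx_def by blast

definition QQ :: "'a poly" where "QQ = (\<Prod>\<sigma>\<in>Aut E P. [:- \<sigma> \<theta>, 1:])"

lemma QQ_P: "poly_over P QQ"
  unfolding QQ_def by (rule po_prod[OF P_sf]) (use po_linear[OF P_sf] Aut_mem thP in blast)

lemma QQ_inv: assumes t: "\<tau> \<in> Aut E P" shows "map_poly \<tau> QQ = QQ"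
proof -
  have h: "hom_on P \<tau>" using AutD(1)[OF t] .
  have "map_poly \<tau> QQ = (\<Prod>\<sigma>\<in>Aut E P. map_poly \<tau> [:- \<sigma> \<theta>, 1:])"
    unfolding QQ_def by (rule map_hom_prod[OF P_sf h]) (use po_linear[OF P_sf] Aut_mem thP in blast)
  also have "\<dots> = (\<Prod>\<sigma>\<in>Aut E P. [:- (\<tau> \<circ> \<sigma>) \<theta>, 1:])"
    by (rule prod.cong) (auto simp: map_linear[OF P_sf h] Aut_mem thP)
  also have "\<dots> = (\<Prod>\<sigma>\<in>(\<lambda>\<sigma>. \<tau> \<circ> \<sigma>) ` Aut E P. [:- \<sigma> \<theta>, 1:])"
    using prod.reindex[OF Aut_comp_inj[OF P_sf t], of "\<lambda>\<sigma>. [:- \<sigma> \<theta>, 1:]"] by (simp add: o_def)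
  also have "(\<lambda>\<sigma>. \<tau> \<circ> \<sigma>) ` Aut E P = Aut E P"
  proof (rule card_subset_eq[OF aut_finite])
    show "(\<lambda>\<sigma>. \<tau> \<circ> \<sigma>) ` Aut E P \<subseteq> Aut E P" using Aut_comp[OF P_sf t] by blast
    show "card ((\<lambda>\<sigma>. \<tau> \<circ> \<sigma>) ` Aut E P) = card (Aut E P)" using card_image[OF Aut_comp_inj[OF P_sf t]] .
  qed
  finally show ?thesis unfolding QQ_def .
qed

lemma QQ_Fx: "poly_over Fx QQ"
  unfolding poly_over_def Fx_def
proof (intro allI CollectI conjI ballI)
  fix i show "coeff QQ i \<in> P" using QQ_P po_coeff by blast
  fix \<tau> assume t: "\<tau> \<in> Aut E P"
  have "\<tau> (coeff QQ i) = coeff (map_poly \<tau> QQ) i" using coeff_map_hom[OF P_sf AutD(1)[OF t]] by simp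
  then show "\<tau> (coeff QQ i) = coeff QQ i" using QQ_inv[OF t] by simp
qed

lemma QQ_nz: "QQ \<noteq> 0" unfolding QQ_def using aut_finite by (simp add: prod_zero_iff)
lemma QQ_deg: "degree QQ = card (Aut E P)"
  unfolding QQ_def by (subst degree_prod_sum_eq) auto
lemma QQ_root: "poly QQ \<theta> = 0"
  unfolding QQ_def poly_prod using aut_finite Aut_id[of E P] by (auto intro!: prod_zero)

lemma alg_Fx: "alg_over Fx \<theta>" unfolding alg_over_def using QQ_nz QQ_Fx QQ_root by blast

lemma P_Fx: "P = gen_field (insert \<theta> Fx)"
proof
  have "gen_field (insert \<theta> E) \<subseteq> gen_field (insert \<theta> Fx)" by (rule gen_field_mono) (use E_Fx in blast)
  then show "P \<subseteq> gen_field (insert \<theta> Fx)" using Pdef by simp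
  show "gen_field (insert \<theta> Fx) \<subseteq> P" by (rule gen_field_min[OF P_sf]) (use Fx_P thP in blast)
qed

lemma setup_Fx: "simple_setup Fx P \<theta>"
  unfolding simple_setup_def using Fx_sf alg_Fx P_Fx by blast

lemma Aut_Fx: "Aut Fx P = Aut E P"
proof
  show "Aut Fx P \<subseteq> Aut E P"
  proof
    fix \<sigma> assume s: "\<sigma> \<in> Aut Fx P"
    show "\<sigma> \<in> Aut E P" by (rule AutI) (use AutD[OF s] E_Fx in auto)
  qed
  show "Aut E P \<subseteq> Aut Fx P"
  proof
    fix \<sigma> assume s: "\<sigma> \<in> Aut E P"
    have "\<And>x. x \<in> Fx \<Longrightarrow> \<sigma> x = x" using s unfolding Fx_def by blast
    then show "\<sigma> \<in> Aut Fx P" by (intro AutI) (use AutD[OF s] in auto)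
  qed
qed

lemma deg_Fx: "ext_degree Fx P = card (Aut E P)"
proof -
  interpret F: simple_setup Fx P \<theta> by (rule setup_Fx)
  have "ext_degree Fx P = degree (min_poly Fx \<theta>)" by (rule F.P_deg)
  also have "\<dots> \<le> degree QQ" using mp_spec(4)[OF Fx_sf alg_Fx QQ_nz QQ_Fx QQ_root] .
  finally have le: "ext_degree Fx P \<le> card (Aut E P)" using QQ_deg by simp
  have "card (Aut E P) \<le> ext_degree Fx P" using F.aut_card_le Aut_Fx by simp
  then show ?thesis using le by simp
qed

lemma galois_Fx: "galois_ext Fx P"
proof -
  interpret F: simple_setup Fx P \<theta> by (rule setup_Fx)
  show ?thesis unfolding galois_ext_def using F.P_fe deg_Fx Aut_Fx by simp
qed

lemma chain_step_iff:
  assumes ne: "card (Aut E P) \<noteq> 1" and cs: "cluster_size E P = card (Aut E P)"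
  shows "chain_step E P N \<longleftrightarrow> N = Fx"
proof -
  have exist: "is_subfield Fx \<and> E \<subseteq> Fx \<and> Fx \<subset> P \<and> galois_ext Fx P \<and> ext_degree Fx P = cluster_size E P"
  proof (intro conjI)
    show "Fx \<subset> P"
    proof -
      have "Fx \<noteq> P" using deg_Fx ext_degree_self[OF P_sf] ne by auto
      then show ?thesis using Fx_P by blast
    qed
  qed (use Fx_sf E_Fx galois_Fx deg_Fx cs in auto)
  have uniq: "N' = Fx" if N': "is_subfield N'" "E \<subseteq> N'" "N' \<subseteq> P" "galois_ext N' P"
      "ext_degree N' P = cluster_size E P" for N'
  proof -
    have sub: "Aut N' P \<subseteq> Aut E P" using N'(2) unfolding Aut_def is_embedding_def by blast
    have "card (Aut N' P) = card (Aut E P)" using N'(4,5) cs unfolding galois_ext_def by simp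
    then have eqA: "Aut N' P = Aut E P" using card_subset_eq[OF aut_finite sub] by simp
    have NF: "N' \<subseteq> Fx"
    proof
      fix x assume x: "x \<in> N'"
      have "\<forall>\<sigma>\<in>Aut N' P. \<sigma> x = x" using x unfolding Aut_def is_embedding_def by blast
      then show "x \<in> Fx" unfolding Fx_def using eqA x N'(3) by blast
    qed
    have fe: "finite_ext N' P" using N'(4) galois_ext_def by blast
    have "ext_degree Fx P = ext_degree N' P" using deg_Fx N'(5) cs by simp
    then show ?thesis using same_degree_eq2[OF fe Fx_sf NF Fx_P] by simp
  qed
  show ?thesis
  proof
    assume "chain_step E P N"
    then have "\<forall>N'. is_subfield N' \<and> E \<subseteq> N' \<and> N' \<subseteq> P \<and> galois_ext N' P \<and>
           ext_degree N' P = cluster_size E P \<longrightarrow> N' = N" unfolding chain_step_def by blast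
    then show "N = Fx" using exist by blast
  next
    assume "N = Fx"
    then show "chain_step E P N" unfolding chain_step_def using exist uniq by blast
  qed
qed

end


lemma po_pderiv: assumes E: "is_subfield E" and p: "poly_over E p" shows "poly_over E (pderiv p)"
  unfolding poly_over_def
proof
  fix i
  have "of_nat (Suc i) \<in> E" by (rule sf_of_nat[OF E])
  then show "coeff (pderiv p) i \<in> E" unfolding coeff_pderiv using sf_mult[OF E] po_coeff[OF p] by blast
qed

lemma ideal_gcd:
  assumes E: "is_subfield E" and a: "poly_over E a" "a \<noteq> 0" and b: "poly_over E b"
  shows "\<exists>d s t. poly_over E d \<and> d \<noteq> 0 \<and> poly_over E s \<and> a = d * s \<and> poly_over E t \<and> b = d * t \<and>
           (\<forall>y. poly a y = 0 \<and> poly b y = 0 \<longrightarrow> poly d y = 0)"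
proof -
  define I where "I = {u * a + v * b | u v. poly_over E u \<and> poly_over E v}"
  have "a = 1 * a + 0 * b" by simp
  then have aI: "a \<in> I" unfolding I_def using po_one[OF E] po_zero[OF E] by blast
  have "b = 0 * a + 1 * b" by simp
  then have bI: "b \<in> I" unfolding I_def using po_one[OF E] po_zero[OF E] by blast
  define Pd where "Pd = (\<lambda>n. \<exists>d\<in>I. d \<noteq> 0 \<and> degree d = n)"
  have "Pd (degree a)" unfolding Pd_def using aI a by blast
  then have "Pd (LEAST n. Pd n)" by (rule LeastI)
  then obtain d where d: "d \<in> I" "d \<noteq> 0" "degree d = (LEAST n. Pd n)" unfolding Pd_def by blast
  obtain u v where uv: "poly_over E u" "poly_over E v" "d = u * a + v * b" using d(1) I_def by blast
  have dE: "poly_over E d" using uv a b E by (simp add: po_add po_mult)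
  have dvd: "poly_over E (x div d) \<and> x = d * (x div d)" if x: "x \<in> I" for x
  proof -
    obtain u1 v1 where uv1: "poly_over E u1" "poly_over E v1" "x = u1 * a + v1 * b" using x I_def by blast
    have xE: "poly_over E x" using uv1 a b E by (simp add: po_add po_mult)
    define q where "q = x div d"
    have qE: "poly_over E q" unfolding q_def using po_div_mod[OF E dE xE] by simp
    have "x mod d = x - q * d" unfolding q_def by (simp add: minus_div_mult_eq_mod)
    also have "\<dots> = (u1 - q * u) * a + (v1 - q * v) * b" using uv1(3) uv(3) by (simp add: algebra_simps)
    finally have "x mod d \<in> I" unfolding I_def using uv uv1 qE E by (auto intro!: po_diff po_mult)
    have "x mod d = 0"
    proof (rule ccontr)
      assume nz: "x mod d \<noteq> 0"
      then have "degree (x mod d) < degree d" using d(2) by (metis degree_mod_less)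
      moreover have "Pd (degree (x mod d))" unfolding Pd_def using \<open>x mod d \<in> I\<close> nz by blast
      then have "(LEAST n. Pd n) \<le> degree (x mod d)" by (rule Least_le)
      ultimately show False using d(3) by simp
    qed
    then have "x = d * q" unfolding q_def by (metis div_mult_mod_eq add_0_right mult.commute)
    then show ?thesis using qE q_def by simp
  qed
  have roots: "\<forall>y. poly a y = 0 \<and> poly b y = 0 \<longrightarrow> poly d y = 0" using uv(3) by simp
  show ?thesis using dvd[OF aI] dvd[OF bI] dE d(2) roots by blast
qed

lemma separable:
  fixes K :: "'a::field set"
  assumes Kp: "perfect_subfield K" and a: "alg_over K \<beta>"
  shows "\<not> (poly (min_poly K \<beta>) y = 0 \<and> poly (pderiv (min_poly K \<beta>)) y = 0)"
proof
  assume y: "poly (min_poly K \<beta>) y = 0 \<and> poly (pderiv (min_poly K \<beta>)) y = 0"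
  have K: "is_subfield K" using Kp perfect_subfield_def by blast
  define g where "g = min_poly K \<beta>"
  note m = mp_spec[OF K a, folded g_def]
  have g0: "g \<noteq> 0" using mp_nz[OF K a] g_def by simp
  have dg: "degree g \<ge> 1" using mp_deg[OF K a] g_def by simp
  have g'E: "poly_over K (pderiv g)" using po_pderiv[OF K m(1)] .
  show False
  proof (cases "pderiv g = 0")
    case False
    obtain d s t where dst: "poly_over K d" "d \<noteq> 0" "poly_over K s" "g = d * s" "poly_over K t"
      "pderiv g = d * t" "\<forall>y. poly g y = 0 \<and> poly (pderiv g) y = 0 \<longrightarrow> poly d y = 0"
      using ideal_gcd[OF K m(1) g0 g'E] by blast
    have "poly d y = 0" using dst(7) y g_def by blast
    then have dd: "degree d \<ge> 1"
    proof -
      assume pd: "poly d y = 0"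
      show ?thesis
      proof (rule ccontr)
        assume "\<not> degree d \<ge> 1"
        then have "degree d = 0" by simp
        then obtain c where "d = [:c:]" by (metis degree_0_id)
        then show False using pd dst(2) by simp
      qed
    qed
    have "degree d = 0 \<or> degree s = 0" using mp_irred[OF K a dst(1,3)] dst(4) g_def by simp
    then have "degree s = 0" using dd by simp
    then have "degree g = degree d" using dst(4) g0 by (simp add: degree_mult_eq)
    moreover have "degree d \<le> degree (pderiv g)"
    proof -
      have "t \<noteq> 0" using dst(6) False by auto
      then show ?thesis using dst(6) dst(2) by (simp add: degree_mult_eq)
    qed
    moreover have "degree (pderiv g) < degree g"
    proof -
      have "degree (pderiv g) \<le> degree g - 1"
        by (rule degree_le) (auto simp: coeff_pderiv coeff_eq_0)
      then show ?thesis using dg by simp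
    qed
    ultimately show False by simp
  next
    case True
    have cz: "of_nat i * coeff g i = 0" if "i \<ge> 1" for i
    proof -
      have "coeff (pderiv g) (i - 1) = 0" using True by simp
      then show ?thesis using that by (simp add: coeff_pderiv)
    qed
    show False
    proof (cases "CHAR('a) = 0")
      case True
      have "of_nat (degree g) * coeff g (degree g) = (0::'a)" using cz dg by blast
      moreover have "of_nat (degree g) \<noteq> (0::'a)" using True dg by (simp add: of_nat_eq_0_iff_char_dvd)
      ultimately show False using m(2) by simp
    next
      case False
      define p where "p = CHAR('a)"
      have pp: "prime p" unfolding p_def using False prime_CHAR_semidom by blast
      have p2: "p \<ge> 2" using pp prime_ge_2_nat by blast
      have perf: "\<forall>x\<in>K. \<exists>z\<in>K. z ^ p = x" using Kp False unfolding perfect_subfield_def p_def by blast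
      have "\<forall>j. \<exists>z. z \<in> K \<and> z ^ p = coeff g (p * j)"
      proof
        fix j
        have "coeff g (p * j) \<in> K" using po_coeff[OF m(1)] .
        then obtain z where "z \<in> K" "z ^ p = coeff g (p * j)" using perf by blast
        then show "\<exists>z. z \<in> K \<and> z ^ p = coeff g (p * j)" by blast
      qed
      from choice[OF this] obtain r where r0: "\<forall>j. r j \<in> K \<and> r j ^ p = coeff g (p * j)" by blast
      then have r: "\<And>j. r j \<in> K" "\<And>j. r j ^ p = coeff g (p * j)" by auto
      define h where "h = (\<Sum>j\<le>degree g. monom (r j) j)"
      have hE: "poly_over K h" unfolding h_def using r(1) K by (intro po_sum) (auto intro: po_monom)
      have "h ^ p = (\<Sum>j\<le>degree g. monom (r j) j ^ p)"
        unfolding h_def by (rule freshmans_dream_sum) (use pp in \<open>simp_all add: p_def\<close>)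
      also have "\<dots> = (\<Sum>j\<le>degree g. monom (coeff g (p * j)) (j * p))" by (simp add: monom_power r(2))
      also have "\<dots> = g"
      proof (rule poly_eqI)
        fix k
        have lhs: "coeff (\<Sum>j\<le>degree g. monom (coeff g (p * j)) (j * p)) k =
              (\<Sum>j\<le>degree g. if k = j * p then coeff g (p * j) else 0)"
          by (simp add: coeff_sum coeff_monom eq_commute[of "_ * p" k])
        show "coeff (\<Sum>j\<le>degree g. monom (coeff g (p * j)) (j * p)) k = coeff g k"
        proof (cases "p dvd k")
          case True
          then obtain j0 where j0: "k = p * j0" by blast
          have "(\<Sum>j\<le>degree g. if k = j * p then coeff g (p * j) else 0) =
                (\<Sum>j\<le>degree g. if j = j0 then coeff g (p * j) else 0)"
            by (rule sum.cong) (use j0 p2 in \<open>auto simp: mult.commute\<close>)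
          also have "\<dots> = (if j0 \<le> degree g then coeff g k else 0)" using j0 by simp
          also have "\<dots> = coeff g k"
          proof (cases "j0 \<le> degree g")
            case False
            have "j0 \<le> p * j0" using p2 by simp
            then have "k > degree g" using j0 False by linarith
            then show ?thesis using False by (simp add: coeff_eq_0)
          qed simp
          finally show ?thesis using lhs by simp
        next
          case False
          have "(\<Sum>j\<le>degree g. if k = j * p then coeff g (p * j) else 0) = 0"
            by (rule sum.neutral) (use False in auto)
          moreover have "coeff g k = 0"
          proof -
            have k1: "k \<ge> 1" using False by (cases k) auto
            have "of_nat k \<noteq> (0::'a)" using False by (simp add: of_nat_eq_0_iff_char_dvd p_def)
            then show ?thesis using cz[OF k1] by simp
          qed
          ultimately show ?thesis using lhs by simp
        qed
      qed
      finally have gh: "g = h ^ p" by simp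
      have "poly h \<beta> ^ p = 0" using m(3) gh by simp
      then have hb: "poly h \<beta> = 0" by simp
      have h0: "h \<noteq> 0" using g0 gh p2 by auto
      have "degree g = p * degree h" using gh degree_power_eq[OF h0] by simp
      moreover have "degree h \<ge> 1"
      proof (rule ccontr)
        assume "\<not> degree h \<ge> 1"
        then have "degree h = 0" by simp
        then obtain c where "h = [:c:]" by (metis degree_0_id)
        then show False using hb h0 by simp
      qed
      ultimately have "degree h < degree g" using p2 by simp
      then show False using m(4)[OF h0 hE hb] by simp
    qed
  qed
qed


lemma gen_field_in: "x \<in> S \<Longrightarrow> x \<in> gen_field S" using gen_field_sup by blast

lemma two_gen:
  fixes K :: "'a::alg_closed_field set"
  assumes Kp: "perfect_subfield K" and inf: "infinite K" and a: "alg_over K \<alpha>" and b: "alg_over K \<beta>"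
  shows "\<exists>\<gamma>. \<gamma> \<in> gen_field (insert \<alpha> (insert \<beta> K)) \<and> gen_field (insert \<alpha> (insert \<beta> K)) = gen_field (insert \<gamma> K)"
proof -
  have K: "is_subfield K" using Kp perfect_subfield_def by blast
  define f where "f = min_poly K \<alpha>"
  define g where "g = min_poly K \<beta>"
  note mf = mp_spec[OF K a, folded f_def] and mg = mp_spec[OF K b, folded g_def]
  have f0: "f \<noteq> 0" and g0: "g \<noteq> 0" using mp_nz[OF K a] mp_nz[OF K b] f_def g_def by auto
  define Rf where "Rf = {x. poly f x = 0}"
  define Rg where "Rg = {y. poly g y = 0}"
  have fin: "finite Rf" "finite Rg" unfolding Rf_def Rg_def using poly_roots_finite f0 g0 by auto
  define Bad where "Bad = (\<lambda>(u, v). (u - \<alpha>) / (\<beta> - v)) ` (Rf \<times> (Rg - {\<beta>}))"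
  have fB: "finite Bad" unfolding Bad_def using fin by simp
  have "infinite (K - Bad)" using Diff_infinite_finite[OF fB inf] .
  then obtain c where c: "c \<in> K" "c \<notin> Bad" by (metis Diff_iff finite.emptyI infinite_imp_nonempty ex_in_conv)
  define \<gamma> where "\<gamma> = \<alpha> + c * \<beta>"
  define G where "G = gen_field (insert \<alpha> (insert \<beta> K))"
  define E where "E = gen_field (insert \<gamma> K)"
  have Gsf: "is_subfield G" and Esf: "is_subfield E" unfolding G_def E_def using gen_field_sf by auto
  have KG: "K \<subseteq> G" and aG: "\<alpha> \<in> G" and bG: "\<beta> \<in> G" unfolding G_def using gen_field_sup[of "insert \<alpha> (insert \<beta> K)"] by auto
  have KE: "K \<subseteq> E" and gE: "\<gamma> \<in> E" unfolding E_def using gen_field_sup[of "insert \<gamma> K"] by auto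
  have gG: "\<gamma> \<in> G" unfolding \<gamma>_def using sf_add[OF Gsf aG sf_mult[OF Gsf _ bG]] KG c(1) by blast
  have EG: "E \<subseteq> G" unfolding E_def using gen_field_min[OF Gsf] KG gG by blast
  have cE: "c \<in> E" using KE c(1) by blast
  define h where "h = pcompose f [:\<gamma>, - c:]"
  have hE: "poly_over E h" unfolding h_def
    by (rule po_pcompose[OF Esf po_mono[OF mf(1) KE]]) (simp add: po_pCons po_const Esf gE cE sf_uminus sf_0)
  have ph: "poly h x = poly f (\<gamma> - c * x)" for x unfolding h_def by (simp add: poly_pcompose mult.commute)
  have hb: "poly h \<beta> = 0" using ph mf(3) \<gamma>_def by simp
  have gE': "poly_over E g" using po_mono[OF mg(1) KE] .
  have bE_alg: "alg_over E \<beta>" unfolding alg_over_def using g0 gE' mg(3) by blast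
  define q where "q = min_poly E \<beta>"
  note mq = mp_spec[OF Esf bE_alg, folded q_def]
  obtain s where s: "poly_over E s" "g = q * s" using mp_dvd[OF Esf bE_alg gE' mg(3)] q_def by auto
  obtain t where t: "poly_over E t" "h = q * t" using mp_dvd[OF Esf bE_alg hE hb] q_def by auto
  have only: "y = \<beta>" if y: "poly q y = 0" for y
  proof (rule ccontr)
    assume ne: "y \<noteq> \<beta>"
    have "poly g y = 0" using s(2) y by simp
    moreover have "poly f (\<gamma> - c * y) = 0" using t(2) y ph[of y] by simp
    ultimately have "(\<gamma> - c * y, y) \<in> Rf \<times> (Rg - {\<beta>})" using ne Rf_def Rg_def by simp
    then have "((\<gamma> - c * y) - \<alpha>) / (\<beta> - y) \<in> Bad" unfolding Bad_def by force
    moreover have "((\<gamma> - c * y) - \<alpha>) / (\<beta> - y) = c" using ne unfolding \<gamma>_def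
      by (simp add: field_simps)
    ultimately show False using c(2) by simp
  qed
  have dq: "degree q = 1"
  proof (rule ccontr)
    assume "degree q \<noteq> 1"
    then have d2: "degree q \<ge> 2" using mp_deg[OF Esf bE_alg] q_def by simp
    define l where "l = [:- \<beta>, 1:]"
    have "l dvd q" unfolding l_def using mq(3) by (simp add: poly_eq_0_iff_dvd)
    then obtain q1 where q1: "q = l * q1" by blast
    have "q1 \<noteq> 0" using q1 mp_nz[OF Esf bE_alg] q_def by auto
    moreover have "l \<noteq> 0" "degree l = 1" unfolding l_def by auto
    ultimately have "degree q = 1 + degree q1" using q1 degree_mult_eq[of l q1] by simp
    then have "degree q1 > 0" using d2 by simp
    then obtain y where y: "poly q1 y = 0" using alg_closed_imp_poly_has_root by blast
    then have "poly q y = 0" using q1 by simp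
    then have "y = \<beta>" using only by blast
    then have "l dvd q1" unfolding l_def using y by (simp add: poly_eq_0_iff_dvd)
    then obtain q2 where q2: "q1 = l * q2" by blast
    have gl: "g = l * (l * (q2 * s))" using s(2) q1 q2 by (simp add: mult_ac)
    have lb: "poly l \<beta> = 0" unfolding l_def by simp
    have "poly (pderiv g) \<beta> = 0" unfolding gl pderiv_mult using lb by simp
    moreover have "poly g \<beta> = 0" using mg(3) .
    ultimately show False using separable[OF Kp b] g_def by blast
  qed
  define c0 where "c0 = coeff q 0"
  have qc: "q = [:c0, 1:]"
  proof (rule poly_eqI)
    fix k show "coeff q k = coeff [:c0, 1:] k"
      using mq(2) dq unfolding c0_def by (cases k) (auto simp: coeff_eq_0 coeff_pCons split: nat.splits)
  qed
  have "poly q \<beta> = c0 + \<beta>" unfolding qc by simp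
  then have "c0 + \<beta> = 0" using mq(3) by simp
  then have "- c0 = \<beta>" by (rule minus_unique)
  moreover have "c0 \<in> E" unfolding c0_def using po_coeff[OF mq(1)] .
  ultimately have bE: "\<beta> \<in> E" using sf_uminus[OF Esf] by blast
  have "\<gamma> - c * \<beta> = \<alpha>" unfolding \<gamma>_def by simp
  then have aE: "\<alpha> \<in> E" using sf_diff[OF Esf gE sf_mult[OF Esf cE bE]] by simp
  have "insert \<alpha> (insert \<beta> K) \<subseteq> E" using KE aE bE by blast
  then have "G \<subseteq> E" unfolding G_def by (rule gen_field_min[OF Esf])
  then have GE: "G = E" using EG by blast
  show ?thesis
    by (rule exI[of _ \<gamma>]) (use gG GE in \<open>simp add: G_def E_def\<close>)
qed


lemma gen_field_basis:
  assumes KP: "finite_ext K P" and B: "is_basis_over K P B"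
  shows "gen_field (K \<union> B) = P"
proof
  have K: "is_subfield K" and P: "is_subfield P" and KsP: "K \<subseteq> P" using KP finite_extD by auto
  show "gen_field (K \<union> B) \<subseteq> P" using gen_field_min[OF P] KsP B unfolding is_basis_over_def by blast
  have "span_over K B \<subseteq> gen_field (K \<union> B)"
  proof (rule span_min[OF sf_subsp[OF gen_field_sf]])
    show "K \<subseteq> gen_field (K \<union> B)" using gen_field_sup[of "K \<union> B"] by blast
    show "B \<subseteq> gen_field (K \<union> B)" using gen_field_sup[of "K \<union> B"] by blast
  qed
  then show "P \<subseteq> gen_field (K \<union> B)" using B unfolding is_basis_over_def by simp
qed

lemma prim_infinite:
  fixes K :: "'a::alg_closed_field set"
  assumes Kp: "perfect_subfield K" and inf: "infinite K" and KP: "finite_ext K P"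
  shows "\<exists>\<theta>. primitive_elem K P \<theta>"
proof -
  have K: "is_subfield K" and P: "is_subfield P" and KsP: "K \<subseteq> P" using KP finite_extD by auto
  have claim: "finite S \<Longrightarrow> S \<subseteq> P \<Longrightarrow> \<exists>\<gamma>\<in>P. gen_field (K \<union> S) = gen_field (insert \<gamma> K)" for S
  proof (induction S rule: finite_induct)
    case empty
    have "insert 0 K = K" using sf_0[OF K] by blast
    then have "gen_field (K \<union> {}) = gen_field (insert 0 K)" by simp
    then show ?case using sf_0[OF P] by blast
  next
    case (insert s S)
    have SP: "S \<subseteq> P" using insert.prems by simp
    obtain \<gamma> where g: "\<gamma> \<in> P" "gen_field (K \<union> S) = gen_field (insert \<gamma> K)" using insert.IH[OF SP] by blast
    have sP: "s \<in> P" using insert.prems by simp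
    have eq: "gen_field (K \<union> insert s S) = gen_field (insert s (insert \<gamma> K))"
    proof
      have "S \<subseteq> gen_field (insert \<gamma> K)" using g(2) gen_field_sup[of "K \<union> S"] by blast
      also have "\<dots> \<subseteq> gen_field (insert s (insert \<gamma> K))" by (rule gen_field_mono) blast
      finally have "K \<union> insert s S \<subseteq> gen_field (insert s (insert \<gamma> K))"
        using gen_field_sup[of "insert s (insert \<gamma> K)"] by blast
      then show "gen_field (K \<union> insert s S) \<subseteq> gen_field (insert s (insert \<gamma> K))"
        by (rule gen_field_min[OF gen_field_sf])
      have "\<gamma> \<in> gen_field (K \<union> S)" using g(2) gen_field_sup[of "insert \<gamma> K"] by blast
      also have "\<dots> \<subseteq> gen_field (K \<union> insert s S)" by (rule gen_field_mono) blast
      finally have "insert s (insert \<gamma> K) \<subseteq> gen_field (K \<union> insert s S)"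
        using gen_field_sup[of "K \<union> insert s S"] by blast
      then show "gen_field (insert s (insert \<gamma> K)) \<subseteq> gen_field (K \<union> insert s S)"
        by (rule gen_field_min[OF gen_field_sf])
    qed
    obtain \<gamma>' where g': "\<gamma>' \<in> gen_field (insert s (insert \<gamma> K))"
      "gen_field (insert s (insert \<gamma> K)) = gen_field (insert \<gamma>' K)"
      using two_gen[OF Kp inf alg_of_finite_ext[OF KP sP] alg_of_finite_ext[OF KP g(1)]] by (elim exE conjE) simp
    have "insert s (insert \<gamma> K) \<subseteq> P" using sP g(1) KsP by blast
    then have "gen_field (insert s (insert \<gamma> K)) \<subseteq> P" by (rule gen_field_min[OF P])
    then have "\<gamma>' \<in> P" using g'(1) by blast
    moreover have "gen_field (K \<union> insert s S) = gen_field (insert \<gamma>' K)" using eq g'(2) by simp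
    ultimately show ?case by blast
  qed
  obtain B where B: "is_basis_over K P B" using KP finite_ext_def by blast
  have fB: "finite B" using basis_finite[OF B] .
  have BP: "B \<subseteq> P" using B unfolding is_basis_over_def by auto
  obtain \<gamma> where g: "\<gamma> \<in> P" "gen_field (K \<union> B) = gen_field (insert \<gamma> K)" using claim[OF fB BP] by blast
  then have "P = gen_field (insert \<gamma> K)" using gen_field_basis[OF KP B] by simp
  then show ?thesis unfolding primitive_elem_def using g(1) by blast
qed

definition RP :: "'a::field set \<Rightarrow> 'a ring" where
  "RP P = \<lparr>carrier = P, monoid.mult = (*), one = 1, zero = 0, add = (+)\<rparr>"

lemma RP_field: assumes P: "is_subfield P" shows "field (RP P)"
proof -
  have ag: "abelian_group (RP P)"
  proof (rule abelian_groupI)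
    fix x assume "x \<in> carrier (RP P)"
    then show "\<exists>y\<in>carrier (RP P). y \<oplus>\<^bsub>RP P\<^esub> x = \<zero>\<^bsub>RP P\<^esub>"
      using sf_uminus[OF P] by (intro bexI[of _ "- x"]) (auto simp: RP_def)
  qed (auto simp: RP_def sf_add[OF P] sf_0[OF P] ac_simps)
  have cm: "comm_monoid (RP P)"
    by (rule comm_monoidI) (auto simp: RP_def sf_mult[OF P] sf_1[OF P] ac_simps)
  have cr: "cring (RP P)" by (rule cringI[OF ag cm]) (simp add: RP_def distrib_right)
  show ?thesis
  proof (rule cring.cring_fieldI2[OF cr])
    show "\<zero>\<^bsub>RP P\<^esub> \<noteq> \<one>\<^bsub>RP P\<^esub>" by (simp add: RP_def)
    fix a assume "a \<in> carrier (RP P)" "a \<noteq> \<zero>\<^bsub>RP P\<^esub>"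
    then show "\<exists>b\<in>carrier (RP P). a \<otimes>\<^bsub>RP P\<^esub> b = \<one>\<^bsub>RP P\<^esub>"
      using sf_inverse[OF P] by (intro bexI[of _ "inverse a"]) (auto simp: RP_def)
  qed
qed

lemma RP_carrier: "carrier (RP P) = P" by (simp add: RP_def)
lemma RP_zero: "zero (RP P) = 0" by (simp add: RP_def)

lemma RP_pow: "a [^]\<^bsub>RP P\<^esub> (i::nat) = a ^ i"
  by (induction i) (simp_all add: nat_pow_def RP_def mult.commute)

lemma finite_span:
  assumes fK: "finite K" and fB: "finite B" shows "finite (span_over K B)"
proof -
  have "span_over K B \<subseteq> (\<lambda>c. \<Sum>s\<in>B. c s * s) ` (B \<rightarrow>\<^sub>E K)"
  proof
    fix x assume "x \<in> span_over K B"
    then obtain c where c: "\<forall>s\<in>B. c s \<in> K" "x = (\<Sum>s\<in>B. c s * s)" unfolding span_over_def by blast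
    have "restrict c B \<in> B \<rightarrow>\<^sub>E K" using c(1) by auto
    moreover have "x = (\<Sum>s\<in>B. restrict c B s * s)" using c(2) by simp
    ultimately show "x \<in> (\<lambda>c. \<Sum>s\<in>B. c s * s) ` (B \<rightarrow>\<^sub>E K)" by blast
  qed
  moreover have "finite (B \<rightarrow>\<^sub>E K)" using fK fB by (simp add: finite_PiE)
  ultimately show ?thesis using finite_subset by blast
qed

lemma prim_finite:
  fixes K :: "'a::field set"
  assumes fK: "finite K" and KP: "finite_ext K P"
  shows "\<exists>\<theta>. primitive_elem K P \<theta>"
proof -
  have K: "is_subfield K" and P: "is_subfield P" and KsP: "K \<subseteq> P" using KP finite_extD by auto
  obtain B where B: "is_basis_over K P B" using KP finite_ext_def by blast
  have fP: "finite P" using finite_span[OF fK basis_finite[OF B]] B unfolding is_basis_over_def by simp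
  interpret R: field "RP P" by (rule RP_field[OF P])
  have "finite (carrier (RP P))" using fP by (simp add: RP_def)
  then obtain a where a: "a \<in> carrier (mult_of (RP P))"
    "carrier (mult_of (RP P)) = {a [^]\<^bsub>RP P\<^esub> i | i::nat. i \<in> UNIV}"
    using R.finite_field_mult_group_has_gen by blast
  have aP: "a \<in> P" and gens: "P - {0} = {a ^ i | i::nat. True}" using a by (simp_all add: RP_pow RP_carrier RP_zero)
  have "P \<subseteq> gen_field (insert a K)"
  proof
    fix y assume y: "y \<in> P"
    show "y \<in> gen_field (insert a K)"
    proof (cases "y = 0")
      case True then show ?thesis using sf_0[OF gen_field_sf] by simp
    next
      case False
      then obtain i where "y = a ^ i" using gens y by blast
      moreover have "a \<in> gen_field (insert a K)" using gen_field_sup by blast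
      ultimately show ?thesis using sf_power[OF gen_field_sf] by simp
    qed
  qed
  moreover have "gen_field (insert a K) \<subseteq> P" using gen_field_min[OF P] aP KsP by blast
  ultimately show ?thesis unfolding primitive_elem_def using aP by blast
qed

lemma primitive_element:
  fixes K :: "'a::alg_closed_field set"
  assumes "perfect_subfield K" "finite_ext K P"
  shows "\<exists>\<theta>. primitive_elem K P \<theta>"
  using prim_infinite[OF assms(1) _ assms(2)] prim_finite[OF _ assms(2)] by blast


lemma primitive_setup:
  fixes K :: "'a::alg_closed_field set"
  assumes K: "perfect_subfield K" and P: "finite_ext K P"
  defines "\<theta>0 \<equiv> SOME \<theta>. primitive_elem K P \<theta>"
  shows "simple_setup K P \<theta>0" "cluster_size K P = card (Aut K P)"
proof -
  have pe: "primitive_elem K P \<theta>0" unfolding \<theta>0_def using someI_ex[OF primitive_element[OF K P]] .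
  have Ks: "is_subfield K" using K perfect_subfield_def by blast
  have a: "alg_over K \<theta>0" using alg_of_finite_ext[OF P] pe primitive_elem_def by blast
  show st: "simple_setup K P \<theta>0" unfolding simple_setup_def using Ks a pe primitive_elem_def by blast
  interpret S: simple_setup K P \<theta>0 by (rule st)
  show "cluster_size K P = card (Aut K P)"
    unfolding cluster_size_def \<theta>0_def[symmetric] using S.card_roots_aut .
qed

lemma indep_insert_not_span:
  assumes I: "lin_indep_over E (insert x S)" and xS: "x \<notin> S" and E: "is_subfield E"
  shows "x \<notin> span_over E S"
proof
  assume "x \<in> span_over E S"
  then obtain c where c: "\<And>s. s \<in> S \<Longrightarrow> c s \<in> E" "x = (\<Sum>s\<in>S. c s * s)" unfolding span_over_def by blast
  define d where "d = (\<lambda>s. if s = x then - 1 else c s)"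
  have fS: "finite S" using indep_finite[OF I] by simp
  have "(\<Sum>s\<in>insert x S. d s * s) = d x * x + (\<Sum>s\<in>S. d s * s)" using fS xS by simp
  also have "(\<Sum>s\<in>S. d s * s) = (\<Sum>s\<in>S. c s * s)" by (rule sum.cong) (use xS in \<open>auto simp: d_def\<close>)
  finally have "(\<Sum>s\<in>insert x S. d s * s) = 0" using c(2) by (simp add: d_def)
  moreover have "\<And>s. s \<in> insert x S \<Longrightarrow> d s \<in> E" using c(1) E by (auto simp: d_def sf_uminus sf_1)
  ultimately have "d x = 0" using lin_indepD[OF I, of d x] by simp
  then show False by (simp add: d_def)
qed

lemma set_indep_fam:
  assumes "lin_indep_over E (f ` I)" "inj_on f I" shows "fam_indep E I f"
  unfolding fam_indep_def
proof (intro conjI allI impI)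
  show "finite I" using assms indep_finite finite_image_iff by blast
  fix d assume d: "(\<forall>i\<in>I. d i \<in> E) \<and> (\<Sum>i\<in>I. d i * f i) = 0"
  define c where "c = (\<lambda>v. d (the_inv_into I f v))"
  have "(\<Sum>v\<in>f ` I. c v * v) = (\<Sum>i\<in>I. c (f i) * f i)"
    using sum.reindex[OF assms(2), of "\<lambda>v. c v * v"] by (simp add: o_def)
  also have "\<dots> = (\<Sum>i\<in>I. d i * f i)" by (rule sum.cong) (auto simp: c_def the_inv_into_f_f[OF assms(2)])
  finally have z: "(\<Sum>v\<in>f ` I. c v * v) = 0" using d by simp
  have cE: "\<And>v. v \<in> f ` I \<Longrightarrow> c v \<in> E" using d by (auto simp: c_def the_inv_into_f_f[OF assms(2)])
  show "\<forall>i\<in>I. d i = 0"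
  proof
    fix i assume i: "i \<in> I"
    have "c (f i) = 0" using lin_indepD[OF assms(1) cE z] i by blast
    then show "d i = 0" using i by (simp add: c_def the_inv_into_f_f[OF assms(2)])
  qed
qed


locale magn =
  fixes K L M F :: "'a::alg_closed_field set" and \<theta> \<phi> \<eta> :: 'a
  assumes Kp: "perfect_subfield K" and KL: "finite_ext K L" and KM: "finite_ext K M"
    and KF: "K \<subseteq> F" and gal: "galois_ext K F" and ld: "lin_disjoint K (galois_closure K L) F"
    and comp: "compositum L F = M"
    and sL: "simple_setup K L \<theta>" and sF: "simple_setup K F \<phi>" and sM: "simple_setup K M \<eta>"
begin

lemma K: "is_subfield K" using Kp perfect_subfield_def by blast
lemma KF': "finite_ext K F" using gal galois_ext_def by blast
lemma L: "is_subfield L" and M: "is_subfield M" and F: "is_subfield F"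
  using KL KM KF' finite_extD by auto

sublocale SL: simple_setup K L \<theta> by (rule sL)
sublocale SF: simple_setup K F \<phi> by (rule sF)
sublocale SM: simple_setup K M \<eta> by (rule sM)

lemma Mdef: "M = gen_field (L \<union> F)" using comp unfolding compositum_def by simp
lemma LM: "L \<subseteq> M" and FM: "F \<subseteq> M" using Mdef gen_field_sup[of "L \<union> F"] by auto
lemma KLs: "K \<subseteq> L" using KL finite_extD by blast

lemma M_thF: "M = gen_field (insert \<theta> F)"
proof
  show "gen_field (insert \<theta> F) \<subseteq> M" by (rule gen_field_min[OF M]) (use SL.thP LM FM in blast)
  have "L \<subseteq> gen_field (insert \<theta> F)"
    unfolding SL.Pdef by (rule gen_field_min[OF gen_field_sf]) (use KF gen_field_sup[of "insert \<theta> F"] in blast)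
  then show "M \<subseteq> gen_field (insert \<theta> F)" unfolding Mdef
    using gen_field_sup[of "insert \<theta> F"] by (intro gen_field_min[OF gen_field_sf]) blast
qed

lemma M_phL: "M = gen_field (insert \<phi> L)"
proof
  show "gen_field (insert \<phi> L) \<subseteq> M" by (rule gen_field_min[OF M]) (use SF.thP LM FM in blast)
  have "F \<subseteq> gen_field (insert \<phi> L)"
    unfolding SF.Pdef by (rule gen_field_min[OF gen_field_sf]) (use KLs gen_field_sup[of "insert \<phi> L"] in blast)
  then show "M \<subseteq> gen_field (insert \<phi> L)" unfolding Mdef
    using gen_field_sup[of "insert \<phi> L"] by (intro gen_field_min[OF gen_field_sf]) blast
qed

abbreviation "m \<equiv> degree (min_poly K \<theta>)"
abbreviation "n \<equiv> degree (min_poly K \<phi>)"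

lemma alg_thF: "alg_over F \<theta>"
  unfolding alg_over_def using mp_nz[OF K SL.alg] po_mono[OF mp_spec(1)[OF K SL.alg] KF] mp_spec(3)[OF K SL.alg]
  by blast

lemma alg_phL: "alg_over L \<phi>"
  unfolding alg_over_def using mp_nz[OF K SF.alg] po_mono[OF mp_spec(1)[OF K SF.alg] KLs] mp_spec(3)[OF K SF.alg]
  by blast

lemma L_gc: "L \<subseteq> galois_closure K L"
proof -
  have "is_embedding K L (\<lambda>x. x)" unfolding is_embedding_def by simp
  then have "L \<subseteq> \<Union>{\<sigma> ` L | \<sigma>. is_embedding K L \<sigma>}" by blast
  then show ?thesis unfolding galois_closure_def using gen_field_sup by blast
qed

lemma emb_gc: assumes "is_embedding K L \<sigma>" shows "\<sigma> ` L \<subseteq> galois_closure K L"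
proof -
  have "\<sigma> ` L \<subseteq> \<Union>{\<sigma> ` L | \<sigma>. is_embedding K L \<sigma>}" using assms by blast
  then show ?thesis unfolding galois_closure_def using gen_field_sup by blast
qed

definition "PW = (\<lambda>i. \<theta> ^ i) ` {..<m}"

lemma PW_basis: "is_basis_over K L PW"
  using simple_ext(2)[OF K SL.alg] SL.P_eq PW_def by simp

lemma PW_indep_F: "lin_indep_over F PW"
proof -
  have "PW \<subseteq> galois_closure K L" using PW_basis L_gc unfolding is_basis_over_def by blast
  moreover have "lin_indep_over K PW" using PW_basis unfolding is_basis_over_def by blast
  ultimately show ?thesis using ld unfolding lin_disjoint_def by blast
qed

lemma deg_MF: "degree (min_poly F \<theta>) = m"
proof -
  have le: "degree (min_poly F \<theta>) \<le> m"
    using mp_spec(4)[OF F alg_thF mp_nz[OF K SL.alg] po_mono[OF mp_spec(1)[OF K SL.alg] KF] mp_spec(3)[OF K SL.alg]] .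
  have inj: "inj_on (\<lambda>i. \<theta> ^ i) {..<m}" using fam_indep_inj[OF K powers_indep[OF K SL.alg]] .
  have fi: "fam_indep F {..<m} (\<lambda>i. \<theta> ^ i)" using set_indep_fam[OF _ inj] PW_indep_F PW_def by simp
  show ?thesis
  proof (rule ccontr)
    assume "degree (min_poly F \<theta>) \<noteq> m"
    then have lt: "degree (min_poly F \<theta>) < m" using le by simp
    have "poly (min_poly F \<theta>) \<theta> = (\<Sum>i<m. coeff (min_poly F \<theta>) i * \<theta> ^ i)"
      by (rule poly_as_sum) (use lt in simp)
    then have z: "(\<Sum>i<m. coeff (min_poly F \<theta>) i * \<theta> ^ i) = 0" using mp_spec(3)[OF F alg_thF] by simp
    have "coeff (min_poly F \<theta>) (degree (min_poly F \<theta>)) = 0"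
      using fam_indepD[OF fi, of "\<lambda>i. coeff (min_poly F \<theta>) i"] z lt po_coeff[OF mp_spec(1)[OF F alg_thF]]
      by simp
    then show False using mp_spec(2)[OF F alg_thF] by simp
  qed
qed

lemma deg_MF': "ext_degree F M = m"
  using simple_ext(4)[OF F alg_thF] deg_MF M_thF by simp

lemma M_span: "M = span_over F PW"
proof -
  have "is_basis_over F {poly p \<theta> | p. poly_over F p} PW"
    using simple_ext(2)[OF F alg_thF] deg_MF PW_def by simp
  then show ?thesis using simple_ext(1)[OF F alg_thF] M_thF unfolding is_basis_over_def by simp
qed

lemma M_gc: "M \<inter> galois_closure K L \<subseteq> L"
proof
  fix x assume x: "x \<in> M \<inter> galois_closure K L"
  show "x \<in> L"
  proof (rule ccontr)
    assume xL: "x \<notin> L"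
    have PL: "span_over K PW = L" "PW \<subseteq> L" "lin_indep_over K PW" using PW_basis unfolding is_basis_over_def by auto
    have "lin_indep_over K (insert x PW)" using indep_insert[OF K PL(3)] xL PL(1) by simp
    moreover have "insert x PW \<subseteq> galois_closure K L" using x PL(2) L_gc by blast
    ultimately have "lin_indep_over F (insert x PW)" using ld unfolding lin_disjoint_def by blast
    moreover have "x \<notin> PW" using xL PL(2) by blast
    ultimately have "x \<notin> span_over F PW" using indep_insert_not_span[OF _ _ F] by blast
    then show False using x M_span by blast
  qed
qed

lemma deg_ML: "ext_degree L M = n"
proof -
  have "ext_degree K M = ext_degree F M * ext_degree K F" using tower[OF KM F KF FM] .
  moreover have "ext_degree K M = ext_degree L M * ext_degree K L" using tower[OF KM L KLs LM] .
  moreover have "ext_degree K L = m" using SL.P_deg .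
  moreover have "ext_degree K F = n" using SF.P_deg .
  moreover have "m \<ge> 1" using mp_deg[OF K SL.alg] .
  ultimately show ?thesis using deg_MF' by (metis mult.commute mult_right_cancel not_one_le_zero)
qed

lemma mp_L_phi: "min_poly L \<phi> = min_poly K \<phi>"
proof (rule mp_unique[OF L])
  show "poly_over L (min_poly K \<phi>)" using po_mono[OF mp_spec(1)[OF K SF.alg] KLs] .
  show "lead_coeff (min_poly K \<phi>) = 1" using mp_spec(2)[OF K SF.alg] .
  show "poly (min_poly K \<phi>) \<phi> = 0" using mp_spec(3)[OF K SF.alg] .
  fix q assume q: "q \<noteq> 0" "poly_over L q" "poly q \<phi> = 0"
  have "degree (min_poly L \<phi>) = n" using simple_ext(4)[OF L alg_phL] M_phL deg_ML by simp
  then show "n \<le> degree q" using mp_spec(4)[OF L alg_phL q] by simp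
qed

definition "R = {\<beta>\<in>F. poly (min_poly K \<phi>) \<beta> = 0}"

lemma card_R: "card R = n"
  using SF.card_roots_aut gal SF.P_deg unfolding galois_ext_def R_def by simp

lemma finite_R: "finite R"
  unfolding R_def using poly_roots_finite[OF mp_nz[OF K SF.alg]] by auto

end


context magn begin

lemma aut_restrict:
  assumes t: "\<tau> \<in> Aut K M"
  shows "\<exists>\<sigma>\<in>Aut K L. \<forall>y\<in>L. \<tau> y = \<sigma> y"
proof -
  have hL: "hom_on L \<tau>" using hom_on_mono[OF AutD(1)[OF t] LM] .
  have emb: "is_embedding K L \<tau>" unfolding is_embedding_hom using hL AutD(2)[OF t] by blast
  have "\<tau> ` L \<subseteq> galois_closure K L" using emb_gc[OF emb] .
  moreover have "\<tau> ` L \<subseteq> M" using Aut_mem[OF t] LM by blast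
  ultimately have "\<tau> ` L \<subseteq> L" using M_gc by blast
  then have tL: "\<tau> \<theta> \<in> L" using SL.thP by blast
  have thM: "\<theta> \<in> M" using SL.thP LM by blast
  have KM': "K \<subseteq> M" using KLs LM by blast
  have "\<tau> (poly (min_poly K \<theta>) \<theta>) = poly (min_poly K \<theta>) (\<tau> \<theta>)"
    using Aut_eval[OF M t K KM' mp_spec(1)[OF K SL.alg] thM] .
  then have r: "poly (min_poly K \<theta>) (\<tau> \<theta>) = 0"
    using mp_spec(3)[OF K SL.alg] hom_zero[OF M AutD(1)[OF t]] by simp
  obtain \<sigma> where s: "\<sigma> \<in> Aut K L" "\<sigma> \<theta> = \<tau> \<theta>" using SL.aut_of_root[OF tL r] by blast
  have "\<forall>y\<in>L. \<tau> y = \<sigma> y"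
  proof
    fix y assume "y \<in> L"
    then obtain p where p: "poly_over K p" "y = poly p \<theta>" using SL.P_eq by blast
    have "\<tau> y = poly p (\<tau> \<theta>)" using Aut_eval[OF M t K KM' p(1) thM] p(2) by simp
    also have "\<dots> = \<sigma> y" using Aut_eval[OF L s(1) K KLs p(1) SL.thP] p(2) s(2) by simp
    finally show "\<tau> y = \<sigma> y" .
  qed
  then show ?thesis using s(1) by blast
qed

lemma Fx_sub: "SL.Fx \<subseteq> SM.Fx"
proof
  fix x assume x: "x \<in> SL.Fx"
  then have xL: "x \<in> L" and fx: "\<And>\<sigma>. \<sigma> \<in> Aut K L \<Longrightarrow> \<sigma> x = x" unfolding SL.Fx_def by auto
  have "\<forall>\<tau>\<in>Aut K M. \<tau> x = x"
  proof
    fix \<tau> assume t: "\<tau> \<in> Aut K M"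
    obtain \<sigma> where "\<sigma> \<in> Aut K L" "\<forall>y\<in>L. \<tau> y = \<sigma> y" using aut_restrict[OF t] by blast
    then show "\<tau> x = x" using fx xL by simp
  qed
  then show "x \<in> SM.Fx" unfolding SM.Fx_def using xL LM by blast
qed

lemma M_eq_L: "M = {poly p \<phi> | p. poly_over L p}"
  using simple_ext(1)[OF L alg_phL] M_phL by simp

lemma extend_aut:
  assumes s: "\<sigma> \<in> Aut K L" and b: "\<beta> \<in> R"
  shows "\<exists>\<tau>. \<tau> \<in> Aut K M \<and> (\<forall>y\<in>L. \<tau> y = \<sigma> y) \<and> \<tau> \<phi> = \<beta>"
proof -
  have hs: "hom_on L \<sigma>" using AutD(1)[OF s] .
  have bF: "\<beta> \<in> F" and br: "poly (min_poly K \<phi>) \<beta> = 0" using b R_def by auto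
  have "map_poly \<sigma> (min_poly L \<phi>) = min_poly K \<phi>"
    unfolding mp_L_phi using map_poly_fix[OF K mp_spec(1)[OF K SF.alg]] AutD(2)[OF s] by blast
  then have r: "poly (map_poly \<sigma> (min_poly L \<phi>)) \<beta> = 0" using br by simp
  obtain \<tau> where t: "hom_on (gen_field (insert \<phi> L)) \<tau>" "\<forall>e\<in>L. \<tau> e = \<sigma> e" "\<tau> \<phi> = \<beta>"
    "\<forall>y. y \<notin> gen_field (insert \<phi> L) \<longrightarrow> \<tau> y = y"
    "\<forall>p. poly_over L p \<longrightarrow> \<tau> (poly p \<phi>) = poly (map_poly \<sigma> p) \<beta>"
    using extend_emb[OF L alg_phL hs r] by blast
  have hM: "hom_on M \<tau>" using t(1) M_phL by simp
  have sL: "\<sigma> ` L = L" using AutD(3)[OF s] .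
  have img1: "\<tau> ` M \<subseteq> M"
  proof
    fix z assume "z \<in> \<tau> ` M"
    then obtain p where p: "poly_over L p" "z = \<tau> (poly p \<phi>)" using M_eq_L by blast
    have "z = poly (map_poly \<sigma> p) \<beta>" using t(5) p by simp
    moreover have "poly_over M (map_poly \<sigma> p)" using po_mono[OF po_map_hom[OF L hs p(1)]] sL LM by simp
    ultimately show "z \<in> M" using poly_in_sf[OF M] bF FM by blast
  qed
  have tMsf: "is_subfield (\<tau> ` M)" using hom_image_sf[OF M hM] .
  have Lt: "L \<subseteq> \<tau> ` M"
  proof
    fix y assume y: "y \<in> L"
    then obtain x where x: "x \<in> L" "y = \<sigma> x" using sL by blast
    then have "y = \<tau> x" using t(2) by simp
    then show "y \<in> \<tau> ` M" using x LM by blast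
  qed
  have bt: "\<beta> \<in> \<tau> ` M" using t(3) SF.thP FM by (metis image_eqI subsetD)
  have "F = gen_field (insert \<beta> K)" using SF.root_gen[OF bF br] by simp
  also have "\<dots> \<subseteq> \<tau> ` M" using gen_field_min[OF tMsf] bt Lt KLs by blast
  finally have Ft: "F \<subseteq> \<tau> ` M" .
  have "M \<subseteq> \<tau> ` M" unfolding Mdef using gen_field_min[OF tMsf] Lt Ft Mdef by blast
  then have img: "\<tau> ` M = M" using img1 by blast
  have "\<tau> \<in> Aut K M"
  proof (rule AutI[OF hM])
    show "\<And>x. x \<in> K \<Longrightarrow> \<tau> x = x" using t(2) AutD(2)[OF s] KLs by auto
    show "\<tau> ` M = M" by (rule img)
    show "\<And>y. y \<notin> M \<Longrightarrow> \<tau> y = y" using t(4) M_phL by simp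
  qed
  then show ?thesis using t(2,3) by blast
qed

definition "ext_aut = (\<lambda>(\<sigma>, \<beta>). SOME \<tau>. \<tau> \<in> Aut K M \<and> (\<forall>y\<in>L. \<tau> y = \<sigma> y) \<and> \<tau> \<phi> = \<beta>)"

lemma ext_aut_prop:
  assumes "\<sigma> \<in> Aut K L" "\<beta> \<in> R"
  shows "ext_aut (\<sigma>, \<beta>) \<in> Aut K M \<and> (\<forall>y\<in>L. ext_aut (\<sigma>, \<beta>) y = \<sigma> y) \<and> ext_aut (\<sigma>, \<beta>) \<phi> = \<beta>"
  unfolding ext_aut_def using someI_ex[OF extend_aut[OF assms]] by simp

lemma card_A: "card (Aut K L) * n \<le> card (Aut K M)"
proof -
  have inj: "inj_on ext_aut (Aut K L \<times> R)"
  proof (rule inj_onI)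
    fix a b assume a: "a \<in> Aut K L \<times> R" and b: "b \<in> Aut K L \<times> R" and eq: "ext_aut a = ext_aut b"
    obtain s1 b1 where a': "a = (s1, b1)" "s1 \<in> Aut K L" "b1 \<in> R" using a by blast
    obtain s2 b2 where b': "b = (s2, b2)" "s2 \<in> Aut K L" "b2 \<in> R" using b by blast
    note p1 = ext_aut_prop[OF a'(2,3)] and p2 = ext_aut_prop[OF b'(2,3)]
    have "b1 = b2" using p1 p2 eq a'(1) b'(1) by metis
    moreover have "s1 = s2"
    proof
      fix y show "s1 y = s2 y"
      proof (cases "y \<in> L")
        case True then show ?thesis using p1 p2 eq a'(1) b'(1) by metis
      next
        case False then show ?thesis using AutD(4)[OF a'(2)] AutD(4)[OF b'(2)] by simp
      qed
    qed
    ultimately show "a = b" using a'(1) b'(1) by simp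
  qed
  have sub: "ext_aut ` (Aut K L \<times> R) \<subseteq> Aut K M" using ext_aut_prop by auto
  have "card (Aut K L \<times> R) \<le> card (Aut K M)" using card_inj_on_le[OF inj sub SM.aut_finite] .
  then show ?thesis using card_R by (simp add: card_cartesian_product)
qed

lemma main:
  assumes ne: "card (Aut K L) \<noteq> 1"
  shows "card (Aut K M) \<noteq> 1" "SM.Fx = SL.Fx"
proof -
  have n1: "n \<ge> 1" using mp_deg[OF K SF.alg] .
  have h1: "card (Aut K L) \<ge> 1" using SL.aut_finite Aut_id[of K L] by (metis One_nat_def Suc_leI card_gt_0_iff empty_iff)
  have "card (Aut K L) \<le> card (Aut K L) * n" using n1 by simp
  then have "card (Aut K L) \<le> card (Aut K M)" using card_A by linarith
  then show "card (Aut K M) \<noteq> 1" using ne h1 by linarith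
  have KFx: "K \<subseteq> SL.Fx" using SL.E_Fx .
  have FxM: "SL.Fx \<subseteq> M" using SL.Fx_P LM by blast
  have fe: "finite_ext SL.Fx M" using finite_ext_sub(2)[OF KM SL.Fx_sf KFx FxM] .
  have "ext_degree SL.Fx M = ext_degree L M * ext_degree SL.Fx L" using tower[OF fe L SL.Fx_P LM] .
  also have "\<dots> = n * card (Aut K L)" using deg_ML SL.deg_Fx by simp
  finally have d1: "ext_degree SL.Fx M = n * card (Aut K L)" .
  have d2: "ext_degree SM.Fx M = card (Aut K M)" using SM.deg_Fx .
  have le: "ext_degree SM.Fx M \<le> ext_degree SL.Fx M" using degree_le_sub[OF fe SM.Fx_sf Fx_sub SM.Fx_P] .
  have "ext_degree SM.Fx M = ext_degree SL.Fx M" using le d1 d2 card_A by (simp add: mult.commute)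
  then show "SM.Fx = SL.Fx" using same_degree_eq2[OF fe SM.Fx_sf Fx_sub SM.Fx_P] by simp
qed

end

theorem theorem8p14:
  fixes K L M :: "'a::alg_closed_field set" and Ns :: "'a set list"
  assumes "perfect_subfield K"
    and "finite_ext K L" and "finite_ext K M"
    and "strong_cluster_magnification K L M"
    and "cluster_size K L \<noteq> 1"
  shows "unique_desc_chain K M Ns \<longleftrightarrow> unique_desc_chain K L Ns"
proof -
  obtain F where F: "K \<subseteq> F" "galois_ext K F" "lin_disjoint K (galois_closure K L) F" "compositum L F = M"
    using assms(4) unfolding strong_cluster_magnification_def by blast
  have KF: "finite_ext K F" using F(2) galois_ext_def by blast
  interpret G: magn K L M F "SOME \<theta>. primitive_elem K L \<theta>" "SOME \<theta>. primitive_elem K F \<theta>"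
    "SOME \<theta>. primitive_elem K M \<theta>"
    unfolding magn_def using assms(1-3) F primitive_setup(1)[OF assms(1)] KF by blast
  have csL: "cluster_size K L = card (Aut K L)" by (rule primitive_setup(2)[OF assms(1,2)])
  have csM: "cluster_size K M = card (Aut K M)" by (rule primitive_setup(2)[OF assms(1,3)])
  have neL: "card (Aut K L) \<noteq> 1" using assms(5) csL by simp
  have neM: "card (Aut K M) \<noteq> 1" using G.main(1)[OF neL] .
  have eqF: "G.SM.Fx = G.SL.Fx" using G.main(2)[OF neL] .
  have cM: "chain_step K M N \<longleftrightarrow> N = G.SL.Fx" for N using G.SM.chain_step_iff[OF neM csM] eqF by simp
  have cL: "chain_step K L N \<longleftrightarrow> N = G.SL.Fx" for N using G.SL.chain_step_iff[OF neL csL] by simp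
  show ?thesis
  proof (cases Ns)
    case Nil then show ?thesis using csL csM neL neM by simp
  next
    case (Cons N Ns') then show ?thesis using csL csM neL neM cM cL by simp
  qed
qed


end
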